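(* One has $$[4;\overline{4}]+[0;3,\overline{1,3,1,2}]=\frac92=[3;1,3,\overline{4}]+[0;\overline{1,2,1,3}].$$ In particular, $$\frac92=m(\overline{4}\,3\,\overline{1312})=\lim_{n\to\infty}m\big(\overline{4^n\,3\,(1312)^n\,1313}\big)\in L\cap\mathbb{Q}.$$
   Context: Overlines in continued fractions denote infinite periodic repetition of the indicated block. $\overline{4}\,3\,\overline{1312}$ denotes the bi-infinite sequence $\dots4443131213121312\dots$ (all $4$'s to the left of a single $3$, followed by periodic repetition of $1312$), and $\overline{4^n3(1312)^n1313}$ denotes the bi-infinite periodic sequence obtained by repeating the finite block consisting of $n$ copies of $4$, then $3$, then $n$ copies of $1312$, then $1313$. For $\underline a\in(\mathbb{N}^* )^{\mathbb{Z}}$, $\lambda_0(\underline a)=[a_0;a_1,\dots]+[0;a_{-1},a_{-2},\dots]$, $m(\underline a)=\sup_n\lambda_0(\sigma^n\underline a)$ with $\sigma$ the left shift, and $L=\{\limsup_{n\to\infty}\lambda_0(\sigma^n\underline a):\underline a\in(\mathbb{N}^* )^{\mathbb{Z}}\}$ is the Lagrange spectrum. *)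

theory Defs
  imports "HOL-Analysis.Analysis" "HOL-Library.Liminf_Limsup"
begin

fun cf_fin :: "(nat \<Rightarrow> nat) \<Rightarrow> nat \<Rightarrow> real" where
  "cf_fin a 0 = real (a 0)"
| "cf_fin a (Suc n) = real (a 0) + 1 / cf_fin (\<lambda>k. a (Suc k)) n"

definition cf :: "(nat \<Rightarrow> nat) \<Rightarrow> real" where
  "cf a = lim (cf_fin a)"

definition pos_seq :: "(int \<Rightarrow> nat) \<Rightarrow> bool" where
  "pos_seq a \<longleftrightarrow> (\<forall>i. a i \<ge> 1)"

definition lambda0 :: "(int \<Rightarrow> nat) \<Rightarrow> real" where
  "lambda0 a = cf (\<lambda>k. a (int k)) + cf (\<lambda>k. if k = 0 then 0 else a (- int k))"

definition shift :: "int \<Rightarrow> (int \<Rightarrow> nat) \<Rightarrow> (int \<Rightarrow> nat)" where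
  "shift n a = (\<lambda>i. a (i + n))"

definition markov_m :: "(int \<Rightarrow> nat) \<Rightarrow> real" where
  "markov_m a = (SUP n::int. lambda0 (shift n a))"

definition lagrange_spectrum :: "real set" where
  "lagrange_spectrum = {x. \<exists>a. pos_seq a \<and>
     limsup (\<lambda>n::nat. ereal (lambda0 (shift (int n) a))) = ereal x}"

text \<open>The bi-infinite sequence ...444 3 1312 1312 ... (the 3 at index 0).\<close>
definition seqA :: "int \<Rightarrow> nat" where
  "seqA i = (if i < 0 then 4 else if i = 0 then 3 else [1,3,1,2] ! nat ((i - 1) mod 4))"

definition block :: "nat \<Rightarrow> nat list" where
  "block n = replicate n 4 @ [3] @ concat (replicate n [1,3,1,2]) @ [1,3,1,3]"

definition periodic_seq :: "nat list \<Rightarrow> int \<Rightarrow> nat" where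
  "periodic_seq w i = w ! nat (i mod int (length w))"

end

theory Submission
  imports Defs
begin

definition cfp :: "(nat \<Rightarrow> nat) \<Rightarrow> bool" where
  "cfp a \<longleftrightarrow> (\<forall>k\<ge>1. a k \<ge> 1)"

fun ff :: "nat list \<Rightarrow> real \<Rightarrow> real" where
  "ff [] x = x"
| "ff (c # cs) x = real c + 1 / ff cs x"

lemma cfp_tail: "cfp a \<Longrightarrow> cfp (\<lambda>k. a (Suc k))"
  unfolding cfp_def by auto

lemma cfp_tail1: "cfp a \<Longrightarrow> a (Suc k) \<ge> 1"
  unfolding cfp_def by auto

lemma cf_fin_ge: "cfp a \<Longrightarrow> cf_fin a n \<ge> a 0"
proof (induction n arbitrary: a)
  case 0 then show ?case by simp
next
  case (Suc n)
  have "cf_fin (\<lambda>k. a (Suc k)) n \<ge> a 1" using Suc.IH[OF cfp_tail[OF Suc.prems]] by simp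
  moreover have "a 1 \<ge> 1" using cfp_tail1[OF Suc.prems, of 0] by simp
  ultimately have "cf_fin (\<lambda>k. a (Suc k)) n > 0" by linarith
  then show ?case by simp
qed

lemma cf_fin_le: "cfp a \<Longrightarrow> cf_fin a n \<le> a 0 + 1"
proof (cases n)
  case 0 then show ?thesis by simp
next
  case (Suc m)
  assume a: "cfp a"
  have "cf_fin (\<lambda>k. a (Suc k)) m \<ge> a 1" using cf_fin_ge[OF cfp_tail[OF a]] by simp
  moreover have "a 1 \<ge> 1" using cfp_tail1[OF a, of 0] by simp
  ultimately have "cf_fin (\<lambda>k. a (Suc k)) m \<ge> 1" by linarith
  then have "1 / cf_fin (\<lambda>k. a (Suc k)) m \<le> 1" by simp
  then show ?thesis using Suc by simp
qed

lemma cf_fin_ff: "cf_fin a (k + m) = ff (map a [0..<k]) (cf_fin (\<lambda>i. a (i + k)) m)"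
proof (induction k arbitrary: a)
  case 0 then show ?case by simp
next
  case (Suc k)
  have "map a [0..<Suc k] = a 0 # map (\<lambda>i. a (Suc i)) [0..<k]"
    by (simp add: map_upt_Suc del: upt_Suc)
  moreover have "(\<lambda>i. a (i + Suc k)) = (\<lambda>i. (\<lambda>i. a (Suc i)) (i + k))" by simp
  ultimately show ?case using Suc.IH[of "\<lambda>i. a (Suc i)"] by simp
qed

lemma ff_ge1: "\<forall>c\<in>set cs. c \<ge> 1 \<Longrightarrow> x \<ge> 1 \<Longrightarrow> ff cs x \<ge> 1"
proof (induction cs)
  case Nil then show ?case by simp
next
  case (Cons c cs)
  then have "ff cs x \<ge> 1" by simp
  then have "1 / ff cs x > 0" by simp
  moreover have "real c \<ge> 1" using Cons.prems by simp
  ultimately show ?case unfolding ff.simps by linarith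
qed

lemma ff_pos: "x > 0 \<Longrightarrow> ff cs x > 0"
proof (induction cs)
  case Nil then show ?case by simp
next
  case (Cons c cs)
  then have "1 / ff cs x > 0" by simp
  moreover have "real c \<ge> 0" by simp
  ultimately show ?case unfolding ff.simps by linarith
qed

lemma ff_lip: "\<forall>c\<in>set cs. c \<ge> 1 \<Longrightarrow> x \<ge> 1 \<Longrightarrow> y \<ge> 1 \<Longrightarrow>
   \<bar>ff cs x - ff cs y\<bar> * 2 ^ length cs \<le> 2 * \<bar>x - y\<bar>"
proof (induction cs rule: induct_list012)
  case 1 then show ?case by simp
next
  case (2 c)
  have "\<bar>1/x - 1/y\<bar> = \<bar>x - y\<bar> / (x*y)" using 2 by (simp add: field_simps abs_div)
  also have "\<dots> \<le> \<bar>x - y\<bar>" using 2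
    by (simp add: divide_le_eq) (smt (verit, best) mult_le_cancel_left1 mult_nonneg_nonneg)
  finally show ?case by simp
next
  case (3 c d cs)
  let ?u = "ff cs x" and ?v = "ff cs y"
  have u: "?u \<ge> 1" and v: "?v \<ge> 1" using ff_ge1 3 by auto
  have d: "d \<ge> 1" using 3 by auto
  have IH: "\<bar>?u - ?v\<bar> * 2 ^ length cs \<le> 2 * \<bar>x - y\<bar>" using 3 by auto
  have e1: "1 / (real d + 1 / ?u) = ?u / (d * ?u + 1)" using u d by (simp add: field_simps)
  have e2: "1 / (real d + 1 / ?v) = ?v / (d * ?v + 1)" using v d by (simp add: field_simps)
  have pu1: "d * ?u + 1 > 0" using u by (smt (verit) mult_nonneg_nonneg of_nat_0_le_iff)
  have pu2: "d * ?v + 1 > 0" using v by (smt (verit) mult_nonneg_nonneg of_nat_0_le_iff)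
  note pu = pu1 pu2
  have eq: "ff (c # d # cs) x - ff (c # d # cs) y = (?u - ?v) / ((d * ?u + 1) * (d * ?v + 1))"
  proof -
    have "ff (c # d # cs) x - ff (c # d # cs) y = ?u / (d * ?u + 1) - ?v / (d * ?v + 1)"
      using e1 e2 by simp
    also have "\<dots> = (?u * (d * ?v + 1) - (d * ?u + 1) * ?v) / ((d * ?u + 1) * (d * ?v + 1))"
      using pu by (simp add: diff_frac_eq)
    also have "?u * (d * ?v + 1) - (d * ?u + 1) * ?v = ?u - ?v" by (simp add: algebra_simps)
    finally show ?thesis .
  qed
  have p1: "d * ?u + 1 \<ge> 2" and p2: "d * ?v + 1 \<ge> 2" using u v d
    by (smt (verit, ccfv_SIG) mult_le_cancel_left1 of_nat_1 of_nat_le_iff)+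
  have "(2::real) * 2 \<le> (d * ?u + 1) * (d * ?v + 1)"
    by (rule mult_mono[OF p1 p2]) (use p1 in auto)
  then have "(d * ?u + 1) * (d * ?v + 1) \<ge> 4" by simp
  then have "\<bar>ff (c # d # cs) x - ff (c # d # cs) y\<bar> \<le> \<bar>?u - ?v\<bar> / 4"
  proof -
    let ?P = "(d * ?u + 1) * (d * ?v + 1)"
    have P4: "?P \<ge> 4" by fact
    have "\<bar>ff (c # d # cs) x - ff (c # d # cs) y\<bar> = \<bar>?u - ?v\<bar> / ?P"
      unfolding eq abs_divide using P4 by simp
    also have "\<dots> \<le> \<bar>?u - ?v\<bar> / 4"
      by (rule divide_left_mono) (use P4 in auto)
    finally show ?thesis .
  qed
  then have "\<bar>ff (c # d # cs) x - ff (c # d # cs) y\<bar> * 2 ^ length (c # d # cs)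
     \<le> \<bar>?u - ?v\<bar> / 4 * 2 ^ length (c # d # cs)" by (simp add: mult_right_mono)
  also have "\<dots> = \<bar>?u - ?v\<bar> * 2 ^ length cs" by simp
  finally show ?case using IH by linarith
qed

lemma inv_lip: "(x::real) \<ge> 1 \<Longrightarrow> y \<ge> 1 \<Longrightarrow> \<bar>1/x - 1/y\<bar> \<le> \<bar>x - y\<bar>"
proof -
  assume x: "x \<ge> 1" and y: "y \<ge> 1"
  have "\<bar>1/x - 1/y\<bar> = \<bar>x - y\<bar> / (x*y)" using x y by (simp add: field_simps abs_div)
  also have "\<dots> \<le> \<bar>x - y\<bar>" using x y
    by (simp add: divide_le_eq) (smt (verit, best) mult_le_cancel_left1 mult_nonneg_nonneg)
  finally show ?thesis .
qed

lemma ff_lip0: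
  assumes "\<forall>c\<in>set cs. c \<ge> 1" "x \<ge> 1" "y \<ge> 1"
  shows "\<bar>ff (c0 # cs) x - ff (c0 # cs) y\<bar> * 2 ^ length cs \<le> 2 * \<bar>x - y\<bar>"
proof -
  have u: "ff cs x \<ge> 1" "ff cs y \<ge> 1" using ff_ge1 assms by auto
  have "\<bar>ff (c0 # cs) x - ff (c0 # cs) y\<bar> = \<bar>1 / ff cs x - 1 / ff cs y\<bar>" by simp
  also have "\<dots> \<le> \<bar>ff cs x - ff cs y\<bar>" using inv_lip u by blast
  finally have "\<bar>ff (c0 # cs) x - ff (c0 # cs) y\<bar> * 2 ^ length cs \<le> \<bar>ff cs x - ff cs y\<bar> * 2 ^ length cs"
    by (simp add: mult_right_mono)
  also have "\<dots> \<le> 2 * \<bar>x - y\<bar>" using ff_lip assms by blast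
  finally show ?thesis .
qed

lemma cfp_shift: "cfp a \<Longrightarrow> cfp (\<lambda>i. a (i + k))"
  unfolding cfp_def by auto

lemma ff_close:
  assumes "cfp s" "K \<ge> 1" "x \<ge> 1" "y \<ge> 1"
  shows "\<bar>ff (map s [0..<K]) x - ff (map s [0..<K]) y\<bar> * 2 ^ K \<le> 4 * \<bar>x - y\<bar>"
proof -
  obtain K' where K: "K = Suc K'" using assms(2) by (cases K) auto
  have m: "map s [0..<K] = s 0 # map (\<lambda>i. s (Suc i)) [0..<K']"
    unfolding K by (simp add: map_upt_Suc del: upt_Suc)
  have "\<forall>c\<in>set (map (\<lambda>i. s (Suc i)) [0..<K']). c \<ge> 1" using assms(1) unfolding cfp_def by auto
  from ff_lip0[OF this assms(3,4), of "s 0"]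
  have H: "\<bar>ff (map s [0..<K]) x - ff (map s [0..<K]) y\<bar> * 2 ^ K' \<le> 2 * \<bar>x - y\<bar>"
    unfolding m by simp
  have p2: "(2::real) ^ K = 2 * 2 ^ K'" unfolding K by simp
  have "\<bar>ff (map s [0..<K]) x - ff (map s [0..<K]) y\<bar> * 2 ^ K
     = 2 * (\<bar>ff (map s [0..<K]) x - ff (map s [0..<K]) y\<bar> * 2 ^ K')"
    by (simp only: p2 mult_ac)
  then show ?thesis using H by linarith
qed

lemma cf_fin_cauchy:
  assumes "cfp a" "1 \<le> n" "n \<le> m"
  shows "\<bar>cf_fin a m - cf_fin a n\<bar> \<le> 4 / 2 ^ n"
proof -
  let ?T = "\<lambda>i. a (i + n)"
  have cT: "cfp ?T" using cfp_shift[OF assms(1)] .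
  have an: "a n \<ge> 1" using assms unfolding cfp_def by auto
  have e1: "cf_fin a m = ff (map a [0..<n]) (cf_fin ?T (m - n))"
    using cf_fin_ff[of a n "m - n"] assms by simp
  have e2: "cf_fin a n = ff (map a [0..<n]) (cf_fin ?T 0)"
    using cf_fin_ff[of a n 0] by simp
  have x1: "cf_fin ?T (m - n) \<ge> a n" using cf_fin_ge[OF cT] by simp
  have x2: "cf_fin ?T (m - n) \<le> a n + 1" using cf_fin_le[OF cT] by simp
  have y: "cf_fin ?T 0 = a n" by simp
  have "\<bar>cf_fin a m - cf_fin a n\<bar> * 2 ^ n \<le> 4 * \<bar>cf_fin ?T (m - n) - cf_fin ?T 0\<bar>"
    unfolding e1 e2 by (rule ff_close[OF assms(1,2)]) (use x1 an y in auto)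
  also have "\<dots> \<le> 4" using x1 x2 y by simp
  finally show ?thesis by (simp add: field_simps)
qed

lemma cf_fin_convergent: "cfp a \<Longrightarrow> convergent (cf_fin a)"
proof -
  assume a: "cfp a"
  have "Cauchy (cf_fin a)"
  proof (rule metric_CauchyI)
    fix e :: real assume e: "e > 0"
    obtain M where M: "(1/2::real) ^ M < e / 4" using real_arch_pow_inv[of "e/4" "1/2"] e by auto
    have M2: "4 / 2 ^ Suc M < e"
    proof -
      have "4 / 2 ^ Suc M \<le> 4 * (1/2::real) ^ M" by (simp add: power_one_over field_simps)
      also have "\<dots> < e" using M by simp
      finally show ?thesis .
    qed
    show "\<exists>M. \<forall>m\<ge>M. \<forall>n\<ge>M. dist (cf_fin a m) (cf_fin a n) < e"
    proof (intro exI allI impI)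
      fix m n assume mn: "Suc M \<le> m" "Suc M \<le> n"
      have mono: "4 / 2 ^ k \<le> 4 / (2::real) ^ Suc M" if "Suc M \<le> k" for k
      proof -
        have "(2::real) ^ Suc M \<le> 2 ^ k" using that by (rule power_increasing) simp
        then show ?thesis by (intro divide_left_mono) auto
      qed
      show "dist (cf_fin a m) (cf_fin a n) < e"
      proof (cases "m \<le> n")
        case True
        have "\<bar>cf_fin a n - cf_fin a m\<bar> \<le> 4 / 2 ^ m" using cf_fin_cauchy[OF a _ True] mn by simp
        then show ?thesis using mono[OF mn(1)] M2 by (simp add: dist_real_def abs_minus_commute)
      next
        case False
        have "\<bar>cf_fin a m - cf_fin a n\<bar> \<le> 4 / 2 ^ n" using cf_fin_cauchy[OF a, of n m] mn False by simp
        then show ?thesis using mono[OF mn(2)] M2 by (simp add: dist_real_def)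
      qed
    qed
  qed
  then show ?thesis using Cauchy_convergent_iff by blast
qed

lemma cf_lim: "cfp a \<Longrightarrow> cf_fin a \<longlonglongrightarrow> cf a"
  unfolding cf_def using cf_fin_convergent convergent_LIMSEQ_iff by blast

lemma cf_ge: "cfp a \<Longrightarrow> cf a \<ge> a 0"
  using LIMSEQ_le_const[OF cf_lim] cf_fin_ge by blast

lemma cf_le: "cfp a \<Longrightarrow> cf a \<le> a 0 + 1"
  using LIMSEQ_le_const2[OF cf_lim] cf_fin_le by blast

lemma cf_step: assumes a: "cfp a" shows "cf a = a 0 + 1 / cf (\<lambda>k. a (Suc k))"
proof -
  let ?t = "\<lambda>k. a (Suc k)"
  have t: "cfp ?t" using cfp_tail[OF a] .
  have "cf ?t \<ge> a 1" using cf_ge[OF t] by simp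
  moreover have "a 1 \<ge> 1" using cfp_tail1[OF a, of 0] by simp
  ultimately have nz: "cf ?t \<noteq> 0" by auto
  have eqf: "(\<lambda>m. cf_fin a (Suc m)) = (\<lambda>m. real (a 0) + 1 / cf_fin ?t m)" by simp
  have "(\<lambda>m. cf_fin a (Suc m)) \<longlonglongrightarrow> a 0 + 1 / cf ?t"
    unfolding eqf by (intro tendsto_intros cf_lim[OF t] nz)
  moreover have "(\<lambda>m. cf_fin a (Suc m)) \<longlonglongrightarrow> cf a" using cf_lim[OF a] LIMSEQ_Suc by blast
  ultimately show ?thesis using LIMSEQ_unique by blast
qed

lemma cf_ff: "cfp a \<Longrightarrow> cf a = ff (map a [0..<k]) (cf (\<lambda>i. a (i + k)))"
proof (induction k arbitrary: a)
  case 0 then show ?case by simp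
next
  case (Suc k)
  have "map a [0..<Suc k] = a 0 # map (\<lambda>i. a (Suc i)) [0..<k]"
    by (simp add: map_upt_Suc del: upt_Suc)
  moreover have "(\<lambda>i. a (i + Suc k)) = (\<lambda>i. (\<lambda>i. a (Suc i)) (i + k))" by simp
  ultimately show ?case using Suc.IH[OF cfp_tail[OF Suc.prems]] cf_step[OF Suc.prems] by simp
qed

lemma cf_close:
  assumes s: "cfp s" and t: "cfp t" and agree: "\<forall>k<K. s k = t k" and K: "K \<ge> 1"
  shows "\<bar>cf s - cf t\<bar> \<le> 8 / 2 ^ K"
proof -
  obtain K' where K': "K = Suc K'" using K by (cases K) auto
  let ?S = "\<lambda>i. s (i + K')" and ?T = "\<lambda>i. t (i + K')"
  have eqk: "s K' = t K'" using agree K' by auto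
  have mp: "map s [0..<K'] = map t [0..<K']" using agree K' by (auto intro: map_cong)
  have S1: "cf ?S \<ge> s K'" "cf ?S \<le> s K' + 1" using cf_ge[OF cfp_shift[OF s]] cf_le[OF cfp_shift[OF s]] by auto
  have T1: "cf ?T \<ge> s K'" "cf ?T \<le> s K' + 1" using cf_ge[OF cfp_shift[OF t]] cf_le[OF cfp_shift[OF t]] eqk by auto
  have d1: "\<bar>cf ?S - cf ?T\<bar> \<le> 1" using S1 T1 by simp
  show ?thesis
  proof (cases K')
    case 0
    have "cf s = cf ?S" "cf t = cf ?T" using 0 by simp_all
    then show ?thesis using d1 K' 0 by simp
  next
    case (Suc K'')
    have K1: "K' \<ge> 1" using Suc by simp
    have sk: "s K' \<ge> 1" using s K1 unfolding cfp_def by auto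
    have c1: "cf s = ff (map s [0..<K']) (cf ?S)" using cf_ff[OF s, of K'] .
    have c2: "cf t = ff (map s [0..<K']) (cf ?T)" using cf_ff[OF t, of K'] unfolding mp[symmetric] .
    have "\<bar>cf s - cf t\<bar> = \<bar>ff (map s [0..<K']) (cf ?S) - ff (map s [0..<K']) (cf ?T)\<bar>"
      unfolding c1 c2 ..
    then have "\<bar>cf s - cf t\<bar> * 2 ^ K' \<le> 4 * \<bar>cf ?S - cf ?T\<bar>"
    proof -
      have "1 \<le> cf ?S" "1 \<le> cf ?T" using S1 T1 sk by linarith+
      from ff_close[OF s K1 this] show ?thesis using \<open>\<bar>cf s - cf t\<bar> = _\<close> by simp
    qed
    also have "\<dots> \<le> 4" using d1 by simp
    finally show ?thesis unfolding K' by (simp add: field_simps)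
  qed
qed

definition allpos :: "(nat \<Rightarrow> nat) \<Rightarrow> bool" where
  "allpos s \<longleftrightarrow> (\<forall>k. s k \<ge> 1)"

definition th :: "(nat \<Rightarrow> nat) \<Rightarrow> real" where
  "th s = 1 / cf s"

lemma allpos_cfp: "allpos s \<Longrightarrow> cfp s"
  unfolding allpos_def cfp_def by auto

lemma cf_ge1: "allpos s \<Longrightarrow> cf s \<ge> 1"
  using cf_ge[OF allpos_cfp, of s] unfolding allpos_def
  by (metis of_nat_1 of_nat_le_iff order_trans)

lemma th_pos: "allpos s \<Longrightarrow> th s > 0"
  unfolding th_def using cf_ge1[of s] by simp

lemma th_le1: "allpos s \<Longrightarrow> th s \<le> 1"
  unfolding th_def using cf_ge1[of s] by simp

lemma th_le_first: "allpos s \<Longrightarrow> th s \<le> 1 / s 0"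
proof -
  assume s: "allpos s"
  have "s 0 \<ge> 1" using s unfolding allpos_def by auto
  moreover have "cf s \<ge> s 0" using cf_ge[OF allpos_cfp[OF s]] .
  ultimately show ?thesis unfolding th_def by (simp add: frac_le)
qed

lemma th_close: "allpos s \<Longrightarrow> allpos t \<Longrightarrow> \<forall>k<K. s k = t k \<Longrightarrow> K \<ge> 1 \<Longrightarrow>
   \<bar>th s - th t\<bar> \<le> 8 / 2 ^ K"
proof -
  assume s: "allpos s" and t: "allpos t" and ag: "\<forall>k<K. s k = t k" and K: "K \<ge> 1"
  have "\<bar>th s - th t\<bar> \<le> \<bar>cf s - cf t\<bar>" unfolding th_def
    using inv_lip cf_ge1[OF s] cf_ge1[OF t] by blast
  also have "\<dots> \<le> 8 / 2 ^ K" using cf_close[OF allpos_cfp[OF s] allpos_cfp[OF t] ag K] .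
  finally show ?thesis .
qed

lemma ff_mono: "0 < x \<Longrightarrow> x \<le> y \<Longrightarrow>
   (even (length cs) \<longrightarrow> ff cs x \<le> ff cs y) \<and> (odd (length cs) \<longrightarrow> ff cs y \<le> ff cs x)"
proof (induction cs)
  case Nil then show ?case by simp
next
  case (Cons c cs)
  have px: "ff cs x > 0" and py: "ff cs y > 0" using ff_pos Cons.prems by auto
  show ?case
  proof (cases "even (length cs)")
    case True
    then have "ff cs x \<le> ff cs y" using Cons by auto
    then have "1 / ff cs y \<le> 1 / ff cs x" using px py by (simp add: frac_le)
    then show ?thesis using True by simp
  next
    case False
    then have "ff cs y \<le> ff cs x" using Cons by auto
    then have "1 / ff cs x \<le> 1 / ff cs y" using px py by (simp add: frac_le)
    then show ?thesis using False by simp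
  qed
qed

lemma ff_between: "0 < lo \<Longrightarrow> lo \<le> x \<Longrightarrow> x \<le> hi \<Longrightarrow>
   min (ff cs lo) (ff cs hi) \<le> ff cs x \<and> ff cs x \<le> max (ff cs lo) (ff cs hi)"
proof -
  assume h: "0 < lo" "lo \<le> x" "x \<le> hi"
  have A: "(even (length cs) \<longrightarrow> ff cs lo \<le> ff cs x) \<and> (odd (length cs) \<longrightarrow> ff cs x \<le> ff cs lo)"
    using ff_mono[OF h(1) h(2)] .
  have B: "(even (length cs) \<longrightarrow> ff cs x \<le> ff cs hi) \<and> (odd (length cs) \<longrightarrow> ff cs hi \<le> ff cs x)"
    using ff_mono[of x hi cs] h by auto
  show ?thesis using A B by (cases "even (length cs)") auto
qed

lemma cf_prefix:
  assumes s: "cfp s" and m: "map s [0..<k] = cs" and k: "k \<ge> 1"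
  shows "min (ff cs (real (s k))) (ff cs (real (s k) + 1)) \<le> cf s \<and> cf s \<le> max (ff cs (real (s k))) (ff cs (real (s k) + 1))"
proof -
  have e: "cf s = ff cs (cf (\<lambda>i. s (i + k)))" using cf_ff[OF s, of k] m by simp
  have sk: "s k \<ge> 1" using s k unfolding cfp_def by auto
  have "cf (\<lambda>i. s (i + k)) \<ge> s k" "cf (\<lambda>i. s (i + k)) \<le> s k + 1"
    using cf_ge[OF cfp_shift[OF s, of k]] cf_le[OF cfp_shift[OF s, of k]] by auto
  then show ?thesis unfolding e by (intro ff_between) (use sk in auto)
qed

lemma test1: "min (ff [1,2,1] 3) (ff [1,2,1] (3+1)) = 19/14"
  by simp

lemma test2: "ff [1,3,1,2] x = (14 * x + 5) / (11 * x + 4)" if "x > 0" for x :: real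
  using that by (simp add: field_simps)

definition fw :: "(int \<Rightarrow> nat) \<Rightarrow> int \<Rightarrow> nat \<Rightarrow> nat" where
  "fw a p = (\<lambda>k. a (p + 1 + int k))"
definition bw :: "(int \<Rightarrow> nat) \<Rightarrow> int \<Rightarrow> nat \<Rightarrow> nat" where
  "bw a p = (\<lambda>k. a (p - 1 - int k))"

lemma fw_allpos: "pos_seq a \<Longrightarrow> allpos (fw a p)"
  unfolding pos_seq_def allpos_def fw_def by auto
lemma bw_allpos: "pos_seq a \<Longrightarrow> allpos (bw a p)"
  unfolding pos_seq_def allpos_def bw_def by auto

lemma lam_dec: assumes a: "pos_seq a"
  shows "lambda0 (shift p a) = a p + th (fw a p) + th (bw a p)"
proof -
  let ?F = "\<lambda>k. shift p a (int k)"
  let ?B = "\<lambda>k. if k = 0 then 0 else shift p a (- int k)"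
  have cF: "cfp ?F" using a unfolding cfp_def pos_seq_def shift_def by auto
  have cB: "cfp ?B" using a unfolding cfp_def pos_seq_def shift_def by auto
  have tF: "(\<lambda>k. ?F (Suc k)) = fw a p" unfolding fw_def shift_def by (auto simp: algebra_simps)
  have tB: "(\<lambda>k. ?B (Suc k)) = bw a p" unfolding bw_def shift_def by (auto simp: algebra_simps)
  have "cf ?F = a p + th (fw a p)" using cf_step[OF cF] unfolding tF th_def by (simp add: shift_def)
  moreover have "cf ?B = th (bw a p)" using cf_step[OF cB] unfolding tB th_def by simp
  ultimately show ?thesis unfolding lambda0_def by simp
qed

definition R1 :: "nat \<Rightarrow> nat" where "R1 k = seqA (int k)"
definition R4 :: "nat \<Rightarrow> nat" where "R4 k = 4"
definition R2 :: "nat \<Rightarrow> nat" where "R2 k = [1,2,1,3] ! (k mod 4)"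
definition R3 :: "nat \<Rightarrow> nat" where "R3 k = (if k = 0 then 1 else if k = 1 then 3 else 4)"
definition P1 :: "nat \<Rightarrow> nat" where "P1 k = [1,3,1,2] ! (k mod 4)"

lemma mod4_cases: "(k::nat) mod 4 = 0 \<or> k mod 4 = 1 \<or> k mod 4 = 2 \<or> k mod 4 = 3" by auto

lemma allpos_R1: "allpos R1"
  unfolding allpos_def R1_def seqA_def
proof
  fix k
  have "nat ((int k - 1) mod 4) < length [1,3,1,2::nat]" by (simp add: nat_less_iff)
  then have "[1,3,1,2::nat] ! nat ((int k - 1) mod 4) \<in> set [1,3,1,2]" by (rule nth_mem)
  then have "[1,3,1,2::nat] ! nat ((int k - 1) mod 4) \<ge> 1" by auto
  then show "1 \<le> (if int k < 0 then 4 else if int k = 0 then 3 else [1,3,1,2::nat] ! nat ((int k - 1) mod 4))"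
    by auto
qed

lemma allpos_R4: "allpos R4" unfolding allpos_def R4_def by auto
lemma allpos_R3: "allpos R3" unfolding allpos_def R3_def by auto
lemma nth_ge1: "i < length xs \<Longrightarrow> \<forall>x\<in>set xs. (x::nat) \<ge> 1 \<Longrightarrow> xs ! i \<ge> 1"
  using nth_mem by blast
lemma allpos_R2: "allpos R2" unfolding allpos_def R2_def
  by (intro allI nth_ge1) auto
lemma allpos_P1: "allpos P1" unfolding allpos_def P1_def
  by (intro allI nth_ge1) auto

lemma R1_tail: "(\<lambda>k. R1 (Suc k)) = P1"
proof
  fix k
  have "nat ((int (Suc k) - 1) mod 4) = k mod 4" by (simp add: nat_mod_distrib)
  then show "R1 (Suc k) = P1 k" unfolding R1_def P1_def seqA_def by simp
qed

lemma R1_0: "R1 0 = 3" unfolding R1_def seqA_def by simp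

lemma sq5: "sqrt 5 * sqrt 5 = (5::real)" by simp
lemma sq5_gt: "sqrt 5 > (2::real)"
proof -
  have "sqrt (2^2) < sqrt (5::real)" by (rule real_sqrt_less_mono) simp
  then show ?thesis by simp
qed

lemma ff1312: "(x::real) > 0 \<Longrightarrow> ff [1,3,1,2] x = (14 * x + 5) / (11 * x + 4)"
  by (simp add: field_simps)
lemma ff1213: "(x::real) > 0 \<Longrightarrow> ff [1,2,1,3] x = (15 * x + 4) / (11 * x + 3)"
  by (simp add: field_simps)

lemma cf_R4: "cf R4 = 2 + sqrt 5"
proof -
  let ?x = "cf R4" let ?r = "sqrt 5 :: real"
  have t: "(\<lambda>k. R4 (Suc k)) = R4" unfolding R4_def by simp
  have e: "?x = 4 + 1 / ?x" using cf_step[OF allpos_cfp[OF allpos_R4]] unfolding t by (simp add: R4_def)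
  have g: "?x \<ge> 4" using cf_ge[OF allpos_cfp[OF allpos_R4]] by (simp add: R4_def)
  have q: "?x * ?x - 4 * ?x - 1 = 0" using e g by (simp add: field_simps)
  have "(?x - 2 - ?r) * (?x - 2 + ?r) = ?x * ?x - 4 * ?x + 4 - ?r * ?r" by (simp add: algebra_simps)
  also have "\<dots> = 0" using q sq5 by linarith
  finally have "(?x - 2 - ?r) * (?x - 2 + ?r) = 0" .
  moreover have "?x - 2 + ?r > 0" using g sq5_gt by linarith
  ultimately show ?thesis by simp
qed


lemma cf_P1: "cf P1 = (5 + 4 * sqrt 5) / 11"
proof -
  let ?y = "cf P1" let ?r = "sqrt 5 :: real"
  have t: "(\<lambda>i. P1 (i + 4)) = P1" unfolding P1_def by simp
  have m: "map P1 [0..<4] = [1,3,1,2]" by (simp add: P1_def upt_rec)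
  have g: "?y \<ge> 1" using cf_ge1[OF allpos_P1] .
  have e: "?y = ff [1,3,1,2] ?y" using cf_ff[OF allpos_cfp[OF allpos_P1], of 4] unfolding t m .
  also have "\<dots> = (14 * ?y + 5) / (11 * ?y + 4)" using g by (intro ff1312) simp
  finally have "?y = (14 * ?y + 5) / (11 * ?y + 4)" .
  moreover have "11 * ?y + 4 > 0" using g by simp
  ultimately have "?y * (11 * ?y + 4) = 14 * ?y + 5" by (simp add: eq_divide_eq)
  then have q: "11 * ?y * ?y - 10 * ?y - 5 = 0" by (simp add: algebra_simps)
  have "11 * (?y - (5 + 4 * ?r) / 11) * (?y - (5 - 4 * ?r) / 11) = 11 * ?y * ?y - 10 * ?y + (25 - 16 * (?r * ?r)) / 11"
    by (simp add: field_simps)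
  also have "\<dots> = 0" using q sq5 by simp
  finally have "11 * (?y - (5 + 4 * ?r) / 11) * (?y - (5 - 4 * ?r) / 11) = 0" .
  moreover have "?y - (5 - 4 * ?r) / 11 > 0" using g sq5_gt by (simp add: field_simps)
  ultimately show ?thesis by simp
qed

lemma cf_R2: "cf R2 = (6 + 4 * sqrt 5) / 11"
proof -
  let ?y = "cf R2" let ?r = "sqrt 5 :: real"
  have t: "(\<lambda>i. R2 (i + 4)) = R2" unfolding R2_def by simp
  have m: "map R2 [0..<4] = [1,2,1,3]" by (simp add: R2_def upt_rec)
  have g: "?y \<ge> 1" using cf_ge1[OF allpos_R2] .
  have e: "?y = ff [1,2,1,3] ?y" using cf_ff[OF allpos_cfp[OF allpos_R2], of 4] unfolding t m .
  also have "\<dots> = (15 * ?y + 4) / (11 * ?y + 3)" using g by (intro ff1213) simp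
  finally have "?y = (15 * ?y + 4) / (11 * ?y + 3)" .
  moreover have "11 * ?y + 3 > 0" using g by simp
  ultimately have "?y * (11 * ?y + 3) = 15 * ?y + 4" by (simp add: eq_divide_eq)
  then have q: "11 * ?y * ?y - 12 * ?y - 4 = 0" by (simp add: algebra_simps)
  have "11 * (?y - (6 + 4 * ?r) / 11) * (?y - (6 - 4 * ?r) / 11) = 11 * ?y * ?y - 12 * ?y + (36 - 16 * (?r * ?r)) / 11"
    by (simp add: field_simps)
  also have "\<dots> = 0" using q sq5 by simp
  finally have "11 * (?y - (6 + 4 * ?r) / 11) * (?y - (6 - 4 * ?r) / 11) = 0" .
  moreover have "?y - (6 - 4 * ?r) / 11 > 0" using g sq5_gt by (simp add: field_simps)
  ultimately show ?thesis by simp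
qed

lemma th_R4: "th R4 = sqrt 5 - 2"
proof -
  have "(sqrt 5 - 2) * (2 + sqrt 5) = (1::real)" by (simp add: algebra_simps)
  then show ?thesis unfolding th_def cf_R4 using sq5_gt by (simp add: divide_eq_eq)
qed

lemma th_R1: "th R1 = 5/2 - sqrt 5"
proof -
  let ?r = "sqrt 5 :: real"
  have c: "cf R1 = 3 + 1 / cf P1" using cf_step[OF allpos_cfp[OF allpos_R1]] unfolding R1_tail R1_0 by simp
  have p: "5 + 4 * ?r > 0" using sq5_gt by simp
  have c2: "cf R1 = (26 + 12 * ?r) / (5 + 4 * ?r)" unfolding c cf_P1 using p by (simp add: field_simps)
  have "(5/2 - ?r) * (26 + 12 * ?r) = 5 + 4 * ?r" by (simp add: algebra_simps)
  then show ?thesis unfolding th_def c2 using p sq5_gt by (simp add: divide_eq_eq)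
qed

lemma th_R2: "th R2 = sqrt 5 - 3/2"
proof -
  let ?r = "sqrt 5 :: real"
  have p: "6 + 4 * ?r > 0" using sq5_gt by simp
  have "(?r - 3/2) * (6 + 4 * ?r) = 11" by (simp add: algebra_simps)
  then show ?thesis unfolding th_def cf_R2 using p by (simp add: divide_eq_eq)
qed

lemma R3_shift: "(\<lambda>i. R3 (i + 2)) = R4" unfolding R3_def R4_def by auto
lemma R3_map: "map R3 [0..<2] = [1,3]" by (simp add: R3_def upt_rec)

lemma th_R3: "th R3 = 3 - sqrt 5"
proof -
  let ?r = "sqrt 5 :: real"
  have c: "cf R3 = ff [1,3] (cf R4)" using cf_ff[OF allpos_cfp[OF allpos_R3], of 2] unfolding R3_shift R3_map .
  have p: "2 + ?r > 0" using sq5_gt by simp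
  have c2: "cf R3 = (9 + 4 * ?r) / (7 + 3 * ?r)"
    unfolding c cf_R4 using p by (simp add: field_simps)
  have "(3 - ?r) * (9 + 4 * ?r) = 7 + 3 * ?r" by (simp add: algebra_simps)
  then show ?thesis unfolding th_def c2 using p sq5_gt by (simp add: divide_eq_eq)
qed

lemma ref1: "4 + th R1 + th R4 = 9/2" unfolding th_R1 th_R4 by simp
lemma ref2: "3 + th R2 + th R3 = 9/2" unfolding th_R2 th_R3 by simp

lemma part1: "cf (\<lambda>_. 4) + cf (\<lambda>k. if k = 0 then 0 else if k = 1 then 3 else [1,3,1,2] ! ((k - 2) mod 4)) = 9/2"
proof -
  let ?S = "\<lambda>k. if k = 0 then 0 else if k = 1 then 3 else [1,3,1,2::nat] ! ((k - 2) mod 4)"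
  have a4: "(\<lambda>_. 4::nat) = R4" unfolding R4_def by simp
  have t4: "(\<lambda>k. R4 (Suc k)) = R4" unfolding R4_def ..
  have r40: "R4 0 = 4" unfolding R4_def ..
  have c4: "cf R4 = 4 + th R4" using cf_step[OF allpos_cfp[OF allpos_R4]] unfolding th_def t4 r40
    by simp
  have cS: "cfp ?S" unfolding cfp_def
  proof (intro allI impI)
    fix k :: nat assume "k \<ge> 1"
    have "[1,3,1,2::nat] ! ((k - 2) mod 4) \<ge> 1" by (intro nth_ge1) auto
    then show "?S k \<ge> 1" using \<open>k \<ge> 1\<close> by auto
  qed
  have t: "(\<lambda>k. ?S (Suc k)) = R1"
  proof
    fix k
    show "?S (Suc k) = R1 k"
    proof (cases k)
      case 0 then show ?thesis by (simp add: R1_def seqA_def)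
    next
      case (Suc j)
      have "nat ((int k - 1) mod 4) = j mod 4" using Suc by (simp add: nat_mod_distrib)
      then show ?thesis using Suc by (simp add: R1_def seqA_def)
    qed
  qed
  have cSv: "cf ?S = th R1" using cf_step[OF cS] unfolding t th_def by simp
  show ?thesis unfolding a4 c4 cSv using ref1 by simp
qed

lemma part2: "9/2 = cf (\<lambda>k. if k = 0 then 3 else if k = 1 then 1 else if k = 2 then 3 else 4)
               + cf (\<lambda>k. if k = 0 then 0 else [1,2,1,3] ! ((k - 1) mod 4))"
proof -
  let ?A = "\<lambda>k. if k = 0 then 3 else if k = 1 then 1 else if k = 2 then 3 else 4::nat"
  let ?B = "\<lambda>k. if k = 0 then 0 else [1,2,1,3::nat] ! ((k - 1) mod 4)"
  have cA: "cfp ?A" unfolding cfp_def by auto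
  have cB: "cfp ?B" unfolding cfp_def
  proof (intro allI impI)
    fix k :: nat assume "k \<ge> 1"
    have "[1,2,1,3::nat] ! ((k - 1) mod 4) \<ge> 1" by (intro nth_ge1) auto
    then show "?B k \<ge> 1" using \<open>k \<ge> 1\<close> by auto
  qed
  have tA: "(\<lambda>k. ?A (Suc k)) = R3" unfolding R3_def by auto
  have tB: "(\<lambda>k. ?B (Suc k)) = R2" unfolding R2_def by auto
  have vA: "cf ?A = 3 + th R3" using cf_step[OF cA] unfolding tA th_def by simp
  have vB: "cf ?B = th R2" using cf_step[OF cB] unfolding tB th_def by simp
  show ?thesis unfolding vA vB using ref2 by simp
qed

abbreviation lam :: "(int \<Rightarrow> nat) \<Rightarrow> int \<Rightarrow> real" where
  "lam a p \<equiv> lambda0 (shift p a)"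

lemma C_le2: assumes a: "pos_seq a" and "a p \<le> 2" shows "lam a p \<le> 4"
proof -
  have "th (fw a p) \<le> 1" "th (bw a p) \<le> 1" using th_le1 fw_allpos bw_allpos a by auto
  moreover have "real (a p) \<le> 2" using assms(2) by simp
  ultimately show ?thesis unfolding lam_dec[OF a] by linarith
qed

lemma th_fw_le: fixes c :: nat shows "pos_seq a \<Longrightarrow> a (p + 1) \<ge> c \<Longrightarrow> c \<ge> 1 \<Longrightarrow> th (fw a p) \<le> 1 / c"
proof -
  assume a: "pos_seq a" and c: "a (p + 1) \<ge> c" "c \<ge> 1"
  have h1: "th (fw a p) \<le> 1 / fw a p 0" using th_le_first[OF fw_allpos[OF a]] .
  have h2: "fw a p 0 = a (p + 1)" unfolding fw_def by simp
  have h3: "1 / real (a (p + 1)) \<le> 1 / real c" using c by (intro divide_left_mono) auto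
  show ?thesis using h1 h3 unfolding h2 by linarith
qed

lemma th_bw_le: fixes c :: nat shows "pos_seq a \<Longrightarrow> a (p - 1) \<ge> c \<Longrightarrow> c \<ge> 1 \<Longrightarrow> th (bw a p) \<le> 1 / c"
proof -
  assume a: "pos_seq a" and c: "a (p - 1) \<ge> c" "c \<ge> 1"
  have h1: "th (bw a p) \<le> 1 / bw a p 0" using th_le_first[OF bw_allpos[OF a]] .
  have h2: "bw a p 0 = a (p - 1)" unfolding bw_def by simp
  have h3: "1 / real (a (p - 1)) \<le> 1 / real c" using c by (intro divide_left_mono) auto
  show ?thesis using h1 h3 unfolding h2 by linarith
qed

lemma C_44: assumes a: "pos_seq a" and "a p = 4" "a (p + 1) \<ge> 4" "a (p - 1) \<ge> 4"
  shows "lam a p \<le> 9/2"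
proof -
  have "th (fw a p) \<le> 1/4" using th_fw_le[OF a assms(3)] by simp
  moreover have "th (bw a p) \<le> 1/4" using th_bw_le[OF a assms(4)] by simp
  ultimately show ?thesis unfolding lam_dec[OF a] using assms(2) by simp
qed

lemma C_34: assumes a: "pos_seq a" and "a p = 3" and "a (p + 1) \<ge> 4 \<or> a (p - 1) \<ge> 4"
  shows "lam a p \<le> 9/2"
proof -
  have f1: "th (fw a p) \<le> 1" "th (bw a p) \<le> 1" using th_le1 fw_allpos bw_allpos a by auto
  from assms(3) show ?thesis
  proof
    assume "a (p + 1) \<ge> 4"
    then have "th (fw a p) \<le> 1/4" using th_fw_le[OF a, of 4] by simp
    then show ?thesis unfolding lam_dec[OF a] using assms(2) f1 by simp
  next
    assume "a (p - 1) \<ge> 4"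
    then have "th (bw a p) \<le> 1/4" using th_bw_le[OF a, of 4] by simp
    then show ?thesis unfolding lam_dec[OF a] using assms(2) f1 by simp
  qed
qed

lemma th_1213: assumes s: "allpos s" and "s 0 = 1" "s 1 = 2" "s 2 = 1" "s 3 = 3"
  shows "th s \<le> 14/19"
proof -
  have m: "map s [0..<3] = [1,2,1]" using assms by (simp add: upt_rec numeral_2_eq_2)
  have "min (ff [1,2,1] (real (s 3))) (ff [1,2,1] (real (s 3) + 1)) \<le> cf s"
    using cf_prefix[OF allpos_cfp[OF s] m] by simp
  then have "19/14 \<le> cf s" using assms(5) by simp
  then show ?thesis unfolding th_def by (simp add: frac_le divide_le_eq)
qed

lemma C_mid3: assumes a: "pos_seq a" and "a p = 3"
  and "a (p + 1) = 1" "a (p + 2) = 2" "a (p + 3) = 1" "a (p + 4) = 3"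
  and "a (p - 1) = 1" "a (p - 2) = 2" "a (p - 3) = 1" "a (p - 4) = 3"
  shows "lam a p \<le> 9/2"
proof -
  have "th (fw a p) \<le> 14/19"
    by (rule th_1213[OF fw_allpos[OF a]]) (use assms in \<open>simp_all add: fw_def add.commute add.left_commute\<close>)
  moreover have "th (bw a p) \<le> 14/19"
    by (rule th_1213[OF bw_allpos[OF a]]) (use assms in \<open>simp_all add: bw_def algebra_simps\<close>)
  ultimately show ?thesis unfolding lam_dec[OF a] using assms(2) by simp
qed

lemma crit: assumes a: "pos_seq a" and S: "allpos S" and T: "allpos T" and K: "K \<ge> 1"
  and f: "\<forall>k<K. a (p + 1 + int k) = S k" and b: "\<forall>k<K. a (p - 1 - int k) = T k"
  shows "\<bar>lam a p - (a p + th S + th T)\<bar> \<le> 16 / 2 ^ K"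
proof -
  have "\<bar>th (fw a p) - th S\<bar> \<le> 8 / 2 ^ K"
    using th_close[OF fw_allpos[OF a] S _ K] f unfolding fw_def by simp
  moreover have "\<bar>th (bw a p) - th T\<bar> \<le> 8 / 2 ^ K"
    using th_close[OF bw_allpos[OF a] T _ K] b unfolding bw_def by simp
  ultimately show ?thesis unfolding lam_dec[OF a] by simp
qed

lemma crit1: "pos_seq a \<Longrightarrow> a p = 4 \<Longrightarrow> K \<ge> 1 \<Longrightarrow> \<forall>k<K. a (p + 1 + int k) = R1 k \<Longrightarrow>
  \<forall>k<K. a (p - 1 - int k) = R4 k \<Longrightarrow> \<bar>lam a p - 9/2\<bar> \<le> 16 / 2 ^ K"
  using crit[OF _ allpos_R1 allpos_R4, of a K p] ref1 by simp

lemma crit2: "pos_seq a \<Longrightarrow> a p = 4 \<Longrightarrow> K \<ge> 1 \<Longrightarrow> \<forall>k<K. a (p + 1 + int k) = R4 k \<Longrightarrow>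
  \<forall>k<K. a (p - 1 - int k) = R1 k \<Longrightarrow> \<bar>lam a p - 9/2\<bar> \<le> 16 / 2 ^ K"
  using crit[OF _ allpos_R4 allpos_R1, of a K p] ref1 by (simp add: add.commute add.left_commute)

lemma crit3: "pos_seq a \<Longrightarrow> a p = 3 \<Longrightarrow> K \<ge> 1 \<Longrightarrow> \<forall>k<K. a (p + 1 + int k) = R2 k \<Longrightarrow>
  \<forall>k<K. a (p - 1 - int k) = R3 k \<Longrightarrow> \<bar>lam a p - 9/2\<bar> \<le> 16 / 2 ^ K"
  using crit[OF _ allpos_R2 allpos_R3, of a K p] ref2 by simp

lemma crit4: "pos_seq a \<Longrightarrow> a p = 3 \<Longrightarrow> K \<ge> 1 \<Longrightarrow> \<forall>k<K. a (p + 1 + int k) = R3 k \<Longrightarrow>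
  \<forall>k<K. a (p - 1 - int k) = R2 k \<Longrightarrow> \<bar>lam a p - 9/2\<bar> \<le> 16 / 2 ^ K"
  using crit[OF _ allpos_R3 allpos_R2, of a K p] ref2 by (simp add: add.commute add.left_commute)

lemma seqA_neg: "p < 0 \<Longrightarrow> seqA p = 4" unfolding seqA_def by simp
lemma seqA_0: "seqA 0 = 3" unfolding seqA_def by simp

lemma seqA_pos: assumes "m \<ge> 0" "r \<ge> 0" "r < 4"
  shows "seqA (4 * m + r + 1) = [1,3,1,2] ! nat r"
proof -
  have "(4 * m + r + 1 - 1) mod 4 = r" using assms by simp
  then show ?thesis unfolding seqA_def using assms by simp
qed

lemma pos_seqA: "pos_seq seqA"
  unfolding pos_seq_def
proof
  fix i :: int
  show "seqA i \<ge> 1"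
  proof (cases "i \<le> 0")
    case True then show ?thesis unfolding seqA_def by auto
  next
    case False
    have "nat ((i - 1) mod 4) < length [1,3,1,2::nat]" by (simp add: nat_less_iff)
    then have "[1,3,1,2::nat] ! nat ((i - 1) mod 4) \<ge> 1" by (intro nth_ge1) auto
    then show ?thesis using False unfolding seqA_def by auto
  qed
qed

lemma seqA_m1: "lam seqA (-1) = 9/2"
proof -
  have f: "fw seqA (-1) = R1" unfolding fw_def R1_def by auto
  have b: "bw seqA (-1) = R4" unfolding bw_def R4_def seqA_def by auto
  show ?thesis unfolding lam_dec[OF pos_seqA] f b using ref1 by (simp add: seqA_def)
qed

lemma fw_seqA_2: "fw seqA 2 = R2"
  proof
    fix k
    have "nat ((2 + 1 + int k - 1) mod 4) = (k + 2) mod 4" by (simp add: nat_mod_distrib nat_add_distrib)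
    moreover have "[1,3,1,2::nat] ! ((k + 2) mod 4) = [1,2,1,3] ! (k mod 4)"
    proof -
      have "k mod 4 = 0 \<or> k mod 4 = 1 \<or> k mod 4 = 2 \<or> k mod 4 = 3" by auto
      moreover have "(k + 2) mod 4 = (k mod 4 + 2) mod 4" by (rule mod_add_left_eq[symmetric])
      ultimately show ?thesis by auto
    qed
    ultimately show "fw seqA 2 k = R2 k" unfolding fw_def R2_def seqA_def by simp
  qed

lemma bw_seqA_2: "bw seqA 2 = R3"
  proof
    fix k
    show "bw seqA 2 k = R3 k" unfolding bw_def R3_def seqA_def
      by (cases "k = 0"; cases "k = 1") auto
  qed

lemma seqA_2: "lam seqA 2 = 9/2"
proof -
  note f = fw_seqA_2 and b = bw_seqA_2
  show ?thesis unfolding lam_dec[OF pos_seqA] f b using ref2 by (simp add: seqA_def)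
qed

lemma seqA_mid: assumes m: "m \<ge> 1"
  shows "seqA (4 * m + 2) = 3 \<and> seqA (4 * m + 2 + 1) = 1 \<and> seqA (4 * m + 2 + 2) = 2 \<and>
         seqA (4 * m + 2 + 3) = 1 \<and> seqA (4 * m + 2 + 4) = 3 \<and> seqA (4 * m + 2 - 1) = 1 \<and>
         seqA (4 * m + 2 - 2) = 2 \<and> seqA (4 * m + 2 - 3) = 1 \<and> seqA (4 * m + 2 - 4) = 3"
proof -
  have m0: "m \<ge> 0" "m - 1 \<ge> 0" "m + 1 \<ge> 0" using m by simp_all
  have e: "\<And>j. 0 \<le> j \<Longrightarrow> j < 4 \<Longrightarrow> seqA (4 * m + j + 1) = [1,3,1,2] ! nat j"
    by (rule seqA_pos) (use m0 in auto)
  have e': "\<And>j. 0 \<le> j \<Longrightarrow> j < 4 \<Longrightarrow> seqA (4 * (m - 1) + j + 1) = [1,3,1,2] ! nat j"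
    by (rule seqA_pos) (use m0 in auto)
  have e'': "\<And>j. 0 \<le> j \<Longrightarrow> j < 4 \<Longrightarrow> seqA (4 * (m + 1) + j + 1) = [1,3,1,2] ! nat j"
    by (rule seqA_pos) (use m0 in auto)
  have "seqA (4 * m + 2) = 3" using e[of 1] by (simp add: algebra_simps)
  moreover have "seqA (4 * m + 2 + 1) = 1" using e[of 2] by (simp add: algebra_simps)
  moreover have "seqA (4 * m + 2 + 2) = 2" using e[of 3] by (simp add: algebra_simps nat_numeral)
  moreover have "seqA (4 * m + 2 + 3) = 1" using e''[of 0] by (simp add: algebra_simps)
  moreover have "seqA (4 * m + 2 + 4) = 3" using e''[of 1] by (simp add: algebra_simps)
  moreover have "seqA (4 * m + 2 - 1) = 1" using e[of 0] by (simp add: algebra_simps)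
  moreover have "seqA (4 * m + 2 - 2) = 2" using e'[of 3] by (simp add: algebra_simps nat_numeral)
  moreover have "seqA (4 * m + 2 - 3) = 1" using e'[of 2] by (simp add: algebra_simps)
  moreover have "seqA (4 * m + 2 - 4) = 3" using e'[of 1] by (simp add: algebra_simps)
  ultimately show ?thesis by blast
qed

lemma seqA_le: "lam seqA p \<le> 9/2"
proof -
  have ps: "pos_seq seqA" by (rule pos_seqA)
  consider "p \<le> -2" | "p = -1" | "p = 0" | "p \<ge> 1" by linarith
  then show ?thesis
  proof cases
    case 1
    then show ?thesis by (intro C_44[OF ps]) (auto simp: seqA_neg)
  next
    case 2 then show ?thesis using seqA_m1 by simp
  next
    case 3 then show ?thesis by (intro C_34[OF ps]) (auto simp: seqA_neg seqA_0)
  next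
    case 4
    define m where "m = (p - 1) div 4"
    define r where "r = (p - 1) mod 4"
    have m0: "m \<ge> 0" using 4 unfolding m_def by simp
    have r0: "r \<ge> 0" "r < 4" unfolding r_def by simp_all
    have pe: "p = 4 * m + r + 1" unfolding m_def r_def by simp
    have vp: "seqA p = [1,3,1,2] ! nat r" unfolding pe using seqA_pos m0 r0 by simp
    consider "r = 0" | "r = 1" | "r = 2" | "r = 3" using r0 by linarith
    then show ?thesis
    proof cases
      case 1 then show ?thesis using C_le2[OF ps, of p] vp by simp
    next
      case 3 then show ?thesis using C_le2[OF ps, of p] vp by simp
    next
      case 4 then show ?thesis using C_le2[OF ps, of p] vp by (simp add: nat_numeral)
    next
      case 2
      show ?thesis
      proof (cases "m = 0")
        case True then have "p = 2" using pe 2 by simp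
        then show ?thesis using seqA_2 by simp
      next
        case False
        then have m1: "m - 1 \<ge> 0" using m0 by simp
        have pe2: "p = 4 * m + 2" using pe 2 by simp
        have m1': "m \<ge> 1" using False m0 by simp
        note sm = seqA_mid[OF m1']
        show ?thesis unfolding pe2
          by (rule C_mid3[OF ps]) (use sm in blast)+
      qed
    qed
  qed
qed

lemma part3: "(9/2::real) = markov_m seqA"
proof -
  have "Sup (range (\<lambda>n. lam seqA n)) = 9/2"
    by (rule cSup_eq_maximum) (use seqA_m1 seqA_le in \<open>auto intro: range_eqI[of _ _ "-1"]\<close>)
  then show ?thesis unfolding markov_m_def by simp
qed

lemma length_block: "length (block n) = 5 * n + 5"
  unfolding block_def by (induction n) auto

lemma concat_rep_nth: "i < n * length xs \<Longrightarrow> concat (replicate n xs) ! i = xs ! (i mod length xs)"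
proof (induction n arbitrary: i)
  case 0 then show ?case by simp
next
  case (Suc n)
  show ?case
  proof (cases "i < length xs")
    case True then show ?thesis by (simp add: nth_append)
  next
    case False
    then have "i - length xs < n * length xs" using Suc.prems by simp
    then have "concat (replicate n xs) ! (i - length xs) = xs ! ((i - length xs) mod length xs)"
      using Suc.IH by blast
    moreover have "(i - length xs) mod length xs = i mod length xs" using False
      by (simp add: le_mod_geq)
    ultimately show ?thesis using False by (simp add: nth_append)
  qed
qed

lemma block_seqA: assumes j: "j \<le> 5 * n + 3"
  shows "block n ! j = seqA (int j - int n)"
proof -
  have bd: "block n = replicate n 4 @ (3 # (concat (replicate n [1,3,1,2]) @ [1,3,1,3]))"
    unfolding block_def by simp
  consider "j < n" | "j = n" | "n < j \<and> j \<le> 5 * n" | "5 * n < j" by linarith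
  then show ?thesis
  proof cases
    case 1 then show ?thesis unfolding bd by (simp add: nth_append seqA_def)
  next
    case 2 then show ?thesis unfolding bd by (simp add: nth_append seqA_def)
  next
    case 3
    have lc: "length (concat (replicate n [1,3,1,2::nat])) = 4 * n" by (induction n) auto
    have lt: "j - n - 1 < 4 * n" using 3 by linarith
    have "block n ! j = concat (replicate n [1,3,1,2]) ! (j - n - 1)"
      unfolding bd using 3 lc lt by (simp add: nth_append)
    also have "\<dots> = [1,3,1,2] ! ((j - n - 1) mod 4)"
      using concat_rep_nth[of "j - n - 1" n "[1,3,1,2::nat]"] lt by (simp add: mult.commute)
    also have "(j - n - 1) mod 4 = nat ((int j - int n - 1) mod 4)"
    proof -
      have e: "int j - int n - 1 = int (j - n - 1)" using 3 by simp
      show ?thesis unfolding e by (metis nat_int of_nat_numeral zmod_int)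
    qed
    finally show ?thesis using 3 unfolding seqA_def by simp
  next
    case 4
    have lc: "length (concat (replicate n [1,3,1,2::nat])) = 4 * n" by (induction n) auto
    define t where "t = j - 5 * n - 1"
    have t3: "t < 3" and jt: "j = 5 * n + 1 + t" using 4 j unfolding t_def by auto
    have "block n ! j = [1,3,1,3] ! t"
      unfolding bd using lc jt by (simp add: nth_append)
    also have "\<dots> = [1,3,1,2] ! t" using t3 by (cases t) (auto simp: less_Suc_eq numeral_eq_Suc)
    also have "t = nat ((int j - int n - 1) mod 4)" using jt t3 by simp
    finally show ?thesis using 4 unfolding seqA_def by simp
  qed
qed

lemma block_last: "block n ! (5 * n + 4) = 3"
proof -
  have lc: "length (concat (replicate n [1,3,1,2::nat])) = 4 * n" by (induction n) auto
  have bd: "block n = replicate n 4 @ (3 # (concat (replicate n [1,3,1,2]) @ [1,3,1,3]))"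
    unfolding block_def by simp
  show ?thesis unfolding bd using lc by (simp add: nth_append)
qed

lemma seqA_sym: assumes "m \<ge> 0" "1 \<le> x" "x \<le> 4 * m + 3"
  shows "seqA x = seqA (4 * m + 4 - x)"
proof -
  define r where "r = (x - 1) mod 4"
  have r: "r = 0 \<or> r = 1 \<or> r = 2 \<or> r = 3" unfolding r_def by presburger
  have l: "seqA x = [1,3,1,2] ! nat r" unfolding seqA_def r_def using assms by simp
  define y where "y = 4 * m + 3 - x"
  have y0: "y \<ge> 0" unfolding y_def using assms by simp
  have ye: "4 * m + 4 - x = y + 1" unfolding y_def by simp
  have rr: "seqA (4 * m + 4 - x) = [1,3,1,2] ! nat (y mod 4)"
    unfolding ye seqA_def using y0 by simp
  from r show ?thesis
  proof (elim disjE)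
    assume "r = 0" then have "y mod 4 = 2" unfolding r_def y_def by presburger
    then show ?thesis using l rr \<open>r = 0\<close> by simp
  next
    assume "r = 1" then have "y mod 4 = 1" unfolding r_def y_def by presburger
    then show ?thesis using l rr \<open>r = 1\<close> by simp
  next
    assume "r = 2" then have "y mod 4 = 0" unfolding r_def y_def by presburger
    then show ?thesis using l rr \<open>r = 2\<close> by simp
  next
    assume "r = 3" then have "y mod 4 = 3" unfolding r_def y_def by presburger
    then show ?thesis using l rr \<open>r = 3\<close> by simp
  qed
qed

lemma block_pal: assumes "k \<le> 4 * n + 4"
  shows "block n ! (5 * n + 4 - k) = block n ! (n + k)"
proof -
  consider "k = 0" | "k = 4 * n + 4" | "1 \<le> k \<and> k \<le> 4 * n + 3" using assms by linarith
  then show ?thesis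
  proof cases
    case 1 then show ?thesis using block_last[of n] block_seqA[of n n] by (simp add: seqA_def)
  next
    case 2 then show ?thesis using block_last[of n] block_seqA[of n n] by (simp add: seqA_def)
  next
    case 3
    have "block n ! (5 * n + 4 - k) = seqA (int (5 * n + 4 - k) - int n)"
      by (rule block_seqA) (use 3 in arith)
    also have "int (5 * n + 4 - k) - int n = 4 * int n + 4 - int k" using 3 by simp
    also have "seqA (4 * int n + 4 - int k) = seqA (int k)"
      using seqA_sym[of "int n" "int k"] 3 by simp
    also have "\<dots> = block n ! (n + k)" using block_seqA[of "n + k" n] 3 by simp
    finally show ?thesis .
  qed
qed

definition blockat :: "(int \<Rightarrow> nat) \<Rightarrow> int \<Rightarrow> nat \<Rightarrow> bool" where
  "blockat a s n \<longleftrightarrow> (\<forall>j<5 * n + 5. a (s + int j) = block n ! j)"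

lemma blk_win: assumes "blockat a s n" "s \<le> t" "t \<le> s + 5 * int n + 3"
  shows "a t = seqA (t - s - int n)"
proof -
  define j where "j = nat (t - s)"
  have tj: "t = s + int j" and jl: "j \<le> 5 * n + 3" unfolding j_def using assms(2,3) by auto
  have "a t = block n ! j" using assms(1) jl unfolding blockat_def tj by auto
  also have "\<dots> = seqA (int j - int n)" using block_seqA jl by blast
  finally show ?thesis unfolding tj by simp
qed

lemma blk_last: assumes "blockat a s n" shows "a (s + 5 * int n + 4) = 3"
proof -
  have h: "\<forall>j<5 * n + 5. a (s + int j) = block n ! j" using assms unfolding blockat_def by auto
  have "a (s + int (5 * n + 4)) = block n ! (5 * n + 4)" using h[rule_format, of "5 * n + 4"] by simp
  then show ?thesis using block_last by (simp add: add.assoc)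
qed

lemma blk_prev: assumes "blockat a s' n'" "s = s' + 5 * int n' + 5" "k \<le> 4 * n' + 3"
  shows "a (s - 1 - int k) = seqA (int k)"
proof -
  have h: "\<forall>j<5 * n' + 5. a (s' + int j) = block n' ! j" using assms(1) unfolding blockat_def by auto
  have "a (s' + int (5 * n' + 4 - k)) = block n' ! (5 * n' + 4 - k)"
    using h[rule_format, of "5 * n' + 4 - k"] assms(3) by linarith
  moreover have "s' + int (5 * n' + 4 - k) = s - 1 - int k" using assms(2,3) by simp
  moreover have "block n' ! (5 * n' + 4 - k) = block n' ! (n' + k)" using block_pal assms(3) by simp
  moreover have "block n' ! (n' + k) = seqA (int k)" using block_seqA[of "n' + k" n'] assms(3) by simp
  ultimately show ?thesis by simp
qed

lemma blk_next: assumes "blockat a s n" "k < n" shows "a (s + int k) = 4"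
proof -
  have "a (s + int k) = seqA (s + int k - s - int n)" by (rule blk_win[OF assms(1)]) (use assms in auto)
  then show ?thesis using assms(2) by (simp add: seqA_def)
qed

lemma fwA2: "seqA (3 + int k) = R2 k"
  using fun_cong[OF fw_seqA_2, of k] unfolding fw_def by (simp add: add.commute)
lemma bwA2: "seqA (1 - int k) = R3 k"
  using fun_cong[OF bw_seqA_2, of k] unfolding bw_def by simp

lemma GL:
  assumes a: "pos_seq a"
    and bp: "blockat a (s - 5 * int n' - 5) n'"
    and b: "blockat a s n"
    and bn: "blockat a (s + 5 * int n + 5) n''"
    and K: "1 \<le> K" "K + 1 \<le> n" "K \<le> n'" "K \<le> n''"
    and p: "s \<le> p" "p \<le> s + 5 * int n + 4"
  shows "lam a p \<le> 9/2 + 16 / 2 ^ K"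
proof -
  have W: "\<And>t. s \<le> t \<Longrightarrow> t \<le> s + 5 * int n + 3 \<Longrightarrow> a t = seqA (t - s - int n)"
    using blk_win[OF b] by blast
  have P: "\<And>k. k \<le> 4 * n' + 3 \<Longrightarrow> a (s - 1 - int k) = seqA (int k)"
    using blk_prev[OF bp] by simp
  have NX: "\<And>k. k < n'' \<Longrightarrow> a (s + 5 * int n + 5 + int k) = 4"
    using blk_next[OF bn] by blast
  have LST: "a (s + 5 * int n + 4) = 3" using blk_last[OF b] .
  have eps: "0 \<le> 16 / (2::real) ^ K" by simp
  consider (c0) "p = s" | (c44) "s + 1 \<le> p \<and> p \<le> s + int n - 2" | (c1) "p = s + int n - 1"
    | (cc) "p = s + int n" | (cm) "s + int n + 1 \<le> p \<and> p \<le> s + 5 * int n + 3"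
    | (cl) "p = s + 5 * int n + 4" using p by linarith
  then show ?thesis
  proof cases
    case c0
    have "\<bar>lam a p - 9/2\<bar> \<le> 16 / 2 ^ K"
    proof (rule crit2[OF a _ K(1)])
      have "a p = seqA (p - s - int n)" by (rule W) (use c0 in linarith)+
      then show "a p = 4" using c0 K by (simp add: seqA_def)
      show "\<forall>k<K. a (p + 1 + int k) = R4 k"
      proof (intro allI impI)
        fix k assume k: "k < K"
        have "a (p + 1 + int k) = seqA (p + 1 + int k - s - int n)"
          by (rule W) (use c0 k K in linarith)+
        then show "a (p + 1 + int k) = R4 k" using k c0 K by (simp add: seqA_def R4_def)
      qed
      show "\<forall>k<K. a (p - 1 - int k) = R1 k"
      proof (intro allI impI)
        fix k assume k: "k < K"
        show "a (p - 1 - int k) = R1 k" unfolding R1_def c0 by (rule P) (use k K in linarith)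
      qed
    qed
    then show ?thesis by linarith
  next
    case c44
    show ?thesis
    proof -
      have "lam a p \<le> 9/2"
      proof (rule C_44[OF a])
        have "a p = seqA (p - s - int n)" by (rule W) (use c44 in linarith)+
        then show "a p = 4" using c44 by (simp add: seqA_def)
        have "a (p + 1) = seqA (p + 1 - s - int n)" by (rule W) (use c44 in linarith)+
        then show "a (p + 1) \<ge> 4" using c44 by (simp add: seqA_def)
        have "a (p - 1) = seqA (p - 1 - s - int n)" by (rule W) (use c44 in linarith)+
        then show "a (p - 1) \<ge> 4" using c44 by (simp add: seqA_def)
      qed
      then show ?thesis using eps by linarith
    qed
  next
    case c1
    have "\<bar>lam a p - 9/2\<bar> \<le> 16 / 2 ^ K"
    proof (rule crit1[OF a _ K(1)])
      have "a p = seqA (p - s - int n)" by (rule W) (use c1 K in linarith)+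
      then show "a p = 4" using c1 by (simp add: seqA_def)
      show "\<forall>k<K. a (p + 1 + int k) = R1 k"
      proof (intro allI impI)
        fix k assume k: "k < K"
        have "a (p + 1 + int k) = seqA (p + 1 + int k - s - int n)"
          by (rule W) (use c1 k K in linarith)+
        then show "a (p + 1 + int k) = R1 k" using c1 by (simp add: R1_def)
      qed
      show "\<forall>k<K. a (p - 1 - int k) = R4 k"
      proof (intro allI impI)
        fix k assume k: "k < K"
        have "a (p - 1 - int k) = seqA (p - 1 - int k - s - int n)"
          by (rule W) (use c1 k K in linarith)+
        then show "a (p - 1 - int k) = R4 k" using c1 by (simp add: R4_def seqA_def)
      qed
    qed
    then show ?thesis by linarith
  next
    case cc
    have "lam a p \<le> 9/2"
    proof (rule C_34[OF a])
      have "a p = seqA (p - s - int n)" by (rule W) (use cc in linarith)+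
      then show "a p = 3" using cc by (simp add: seqA_def)
      have "a (p - 1) = seqA (p - 1 - s - int n)" by (rule W) (use cc K in linarith)+
      then show "a (p + 1) \<ge> 4 \<or> a (p - 1) \<ge> 4" using cc by (simp add: seqA_def)
    qed
    then show ?thesis using eps by linarith
  next
    case cl
    have "lam a p \<le> 9/2"
    proof (rule C_34[OF a])
      show "a p = 3" using LST cl by simp
      have "a (s + 5 * int n + 5 + int 0) = 4" by (rule NX) (use K in linarith)
      moreover have e: "p + 1 = s + 5 * int n + 5 + int 0" using cl by simp
      ultimately have "a (p + 1) = 4" by metis
      then show "a (p + 1) \<ge> 4 \<or> a (p - 1) \<ge> 4" by simp
    qed
    then show ?thesis using eps by linarith
  next
    case cm
    define x where "x = p - s - int n"
    have x1: "1 \<le> x" "x \<le> 4 * int n + 3" using cm unfolding x_def by linarith+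
    have ap: "a p = seqA x" unfolding x_def by (rule W) (use cm in linarith)+
    define q where "q = (x - 1) div 4"
    define r where "r = (x - 1) mod 4"
    have q0: "q \<ge> 0" using x1 unfolding q_def by simp
    have r0: "r \<ge> 0" "r < 4" unfolding r_def by simp_all
    have xe: "x = 4 * q + r + 1" unfolding q_def r_def by simp
    have vx: "seqA x = [1,3,1,2] ! nat r" unfolding xe by (rule seqA_pos) (use q0 r0 in auto)
    consider "r = 0" | "r = 2" | "r = 3" | "r = 1" using r0 by linarith
    then show ?thesis
    proof cases
      case 1 then have "lam a p \<le> 4" using C_le2[OF a, of p] vx ap by simp
      then show ?thesis using eps by linarith
    next
      case 2 then have "lam a p \<le> 4" using C_le2[OF a, of p] vx ap by simp
      then show ?thesis using eps by linarith
    next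
      case 3 then have "lam a p \<le> 4" using C_le2[OF a, of p] vx ap by (simp add: nat_numeral)
      then show ?thesis using eps by linarith
    next
      case 4
      have xq: "x = 4 * q + 2" using xe 4 by simp
      consider "q = 0" | "1 \<le> q \<and> q \<le> int n - 1" | "q = int n" using x1 xq q0 by linarith
      then show ?thesis
      proof cases
        case 1
        have "\<bar>lam a p - 9/2\<bar> \<le> 16 / 2 ^ K"
        proof (rule crit3[OF a _ K(1)])
          show "a p = 3" using ap xq 1 by (simp add: seqA_def)
          show "\<forall>k<K. a (p + 1 + int k) = R2 k"
          proof (intro allI impI)
            fix k assume k: "k < K"
            have "a (p + 1 + int k) = seqA (p + 1 + int k - s - int n)"
              by (rule W) (use x_def xq 1 k K in linarith)+
            also have "p + 1 + int k - s - int n = 3 + int k" using x_def xq 1 by simp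
            finally show "a (p + 1 + int k) = R2 k" using fwA2 by simp
          qed
          show "\<forall>k<K. a (p - 1 - int k) = R3 k"
          proof (intro allI impI)
            fix k assume k: "k < K"
            have "a (p - 1 - int k) = seqA (p - 1 - int k - s - int n)"
              by (rule W) (use x_def xq 1 k K in linarith)+
            also have "p - 1 - int k - s - int n = 1 - int k" using x_def xq 1 by simp
            finally show "a (p - 1 - int k) = R3 k" using bwA2 by simp
          qed
        qed
        then show ?thesis by linarith
      next
        case 2
        have q1: "q \<ge> 1" using 2 by simp
        note sm = seqA_mid[OF q1]
        have Wj: "\<And>j. -4 \<le> j \<Longrightarrow> j \<le> 4 \<Longrightarrow> a (p + j) = seqA (4 * q + 2 + j)"
        proof -
          fix j :: int assume j: "-4 \<le> j" "j \<le> 4"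
          have "a (p + j) = seqA (p + j - s - int n)" by (rule W) (use x_def xq 2 j in linarith)+
          also have "p + j - s - int n = 4 * q + 2 + j" using x_def xq by simp
          finally show "a (p + j) = seqA (4 * q + 2 + j)" .
        qed
        have "lam a p \<le> 9/2"
        proof (rule C_mid3[OF a])
          show "a p = 3" using Wj[of 0] sm by simp
          show "a (p + 1) = 1" using Wj[of 1] sm by simp
          show "a (p + 2) = 2" using Wj[of 2] sm by simp
          show "a (p + 3) = 1" using Wj[of 3] sm by simp
          show "a (p + 4) = 3" using Wj[of 4] sm by simp
          show "a (p - 1) = 1" using Wj[of "-1"] sm by simp
          show "a (p - 2) = 2" using Wj[of "-2"] sm by simp
          show "a (p - 3) = 1" using Wj[of "-3"] sm by simp
          show "a (p - 4) = 3" using Wj[of "-4"] sm by simp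
        qed
        then show ?thesis using eps by linarith
      next
        case 3
        have pe: "p = s + 5 * int n + 2" using x_def xq 3 by simp
        have "\<bar>lam a p - 9/2\<bar> \<le> 16 / 2 ^ K"
        proof (rule crit4[OF a _ K(1)])
          show "a p = 3" using ap vx 4 by simp
          show "\<forall>k<K. a (p + 1 + int k) = R3 k"
          proof (intro allI impI)
            fix k assume k: "k < K"
            consider "k = 0" | "k = 1" | "k \<ge> 2" by linarith
            then show "a (p + 1 + int k) = R3 k"
            proof cases
              case 1
              have "a (p + 1) = seqA (p + 1 - s - int n)" by (rule W) (use pe in linarith)+
              also have "p + 1 - s - int n = 4 * int n + 2 + 1" using pe by simp
              finally have "a (p + 1) = 1" using seqA_pos[of "int n" 2] by simp
              then show ?thesis using 1 by (simp add: R3_def)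
            next
              case 2
              have "a (p + 2) = 3" using LST pe by (simp add: add.assoc)
              then show ?thesis using 2 by (simp add: R3_def add.assoc)
            next
              case 3
              have "a (s + 5 * int n + 5 + int (k - 2)) = 4" by (rule NX) (use k K in linarith)
              moreover have "s + 5 * int n + 5 + int (k - 2) = p + 1 + int k" using pe 3 by simp
              ultimately have "a (p + 1 + int k) = 4" by metis
              then show ?thesis using 3 by (simp add: R3_def)
            qed
          qed
          show "\<forall>k<K. a (p - 1 - int k) = R2 k"
          proof (intro allI impI)
            fix k assume k: "k < K"
            have "a (p - 1 - int k) = seqA (p - 1 - int k - s - int n)"
              by (rule W) (use pe k K in linarith)+
            also have "p - 1 - int k - s - int n = 4 * int n + 4 - (3 + int k)" using pe by simp
            also have "seqA (4 * int n + 4 - (3 + int k)) = seqA (3 + int k)"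
              by (rule seqA_sym[symmetric]) (use k K in linarith)+
            finally show "a (p - 1 - int k) = R2 k" using fwA2 by simp
          qed
        qed
        then show ?thesis by linarith
      qed
    qed
  qed
qed

lemma GL2:
  assumes a: "pos_seq a" and b: "blockat a s n" and K: "1 \<le> K" "K + 1 \<le> n"
  shows "\<bar>lam a (s + int n - 1) - 9/2\<bar> \<le> 16 / 2 ^ K"
proof -
  let ?p = "s + int n - 1"
  have W: "\<And>t. s \<le> t \<Longrightarrow> t \<le> s + 5 * int n + 3 \<Longrightarrow> a t = seqA (t - s - int n)"
    using blk_win[OF b] by blast
  show ?thesis
  proof (rule crit1[OF a _ K(1)])
    have "a ?p = seqA (?p - s - int n)" by (rule W) (use K in linarith)+
    then show "a ?p = 4" by (simp add: seqA_def)
    show "\<forall>k<K. a (?p + 1 + int k) = R1 k"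
    proof (intro allI impI)
      fix k assume k: "k < K"
      have "a (?p + 1 + int k) = seqA (?p + 1 + int k - s - int n)"
        by (rule W) (use k K in linarith)+
      then show "a (?p + 1 + int k) = R1 k" by (simp add: R1_def)
    qed
    show "\<forall>k<K. a (?p - 1 - int k) = R4 k"
    proof (intro allI impI)
      fix k assume k: "k < K"
      have "a (?p - 1 - int k) = seqA (?p - 1 - int k - s - int n)"
        by (rule W) (use k K in linarith)+
      then show "a (?p - 1 - int k) = R4 k" by (simp add: R4_def seqA_def)
    qed
  qed
qed

lemma block_ge1: "x \<in> set (block n) \<Longrightarrow> x \<ge> 1"
  unfolding block_def by (cases "n = 0") auto

lemma pos_periodic: "pos_seq (periodic_seq (block n))"
  unfolding pos_seq_def periodic_seq_def
proof
  fix i :: int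
  have L: "length (block n) > 0" using length_block by simp
  have "nat (i mod int (length (block n))) < length (block n)"
    using L by (simp add: nat_less_iff)
  then have "block n ! nat (i mod int (length (block n))) \<in> set (block n)" by (rule nth_mem)
  then show "1 \<le> block n ! nat (i mod int (length (block n)))" by (rule block_ge1)
qed

lemma blockat_periodic: assumes "int (5 * n + 5) dvd s"
  shows "blockat (periodic_seq (block n)) s n"
  unfolding blockat_def periodic_seq_def length_block
proof (intro allI impI)
  fix j assume j: "j < 5 * n + 5"
  have "(s + int j) mod int (5 * n + 5) = int j mod int (5 * n + 5)"
    using assms by (simp add: mod_add_left_eq[symmetric])
  also have "\<dots> = int j" using j by simp
  finally show "block n ! nat ((s + int j) mod int (5 * n + 5)) = block n ! j" by simp
qed

lemma per_upper: assumes n: "n \<ge> 2"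
  shows "lam (periodic_seq (block n)) p \<le> 9/2 + 16 / 2 ^ (n - 1)"
proof -
  let ?a = "periodic_seq (block n)"
  let ?L = "int (5 * n + 5)"
  define s where "s = ?L * (p div ?L)"
  have sp: "s \<le> p" "p \<le> s + 5 * int n + 4"
  proof -
    have "p = ?L * (p div ?L) + p mod ?L" by simp
    moreover have "0 \<le> p mod ?L" "p mod ?L < ?L" by simp_all
    ultimately show "s \<le> p" "p \<le> s + 5 * int n + 4" unfolding s_def by linarith+
  qed
  have b1: "blockat ?a (s - 5 * int n - 5) n"
  proof (rule blockat_periodic)
    have "s - 5 * int n - 5 = ?L * (p div ?L - 1)" unfolding s_def by (simp add: algebra_simps)
    then show "?L dvd s - 5 * int n - 5" by simp
  qed
  have b2: "blockat ?a s n" by (rule blockat_periodic) (simp add: s_def)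
  have b3: "blockat ?a (s + 5 * int n + 5) n"
  proof (rule blockat_periodic)
    have "s + 5 * int n + 5 = ?L * (p div ?L + 1)" unfolding s_def by (simp add: algebra_simps)
    then show "?L dvd s + 5 * int n + 5" by simp
  qed
  show ?thesis by (rule GL[OF pos_periodic b1 b2 b3]) (use n sp in auto)
qed

lemma per_lower: assumes n: "n \<ge> 2"
  shows "\<bar>lam (periodic_seq (block n)) (int n - 1) - 9/2\<bar> \<le> 16 / 2 ^ (n - 1)"
proof -
  have b: "blockat (periodic_seq (block n)) 0 n" by (rule blockat_periodic) simp
  show ?thesis using GL2[OF pos_periodic b, of "n - 1"] n by simp
qed

lemma per_markov: assumes n: "n \<ge> 2"
  shows "\<bar>markov_m (periodic_seq (block n)) - 9/2\<bar> \<le> 16 / 2 ^ (n - 1)"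
proof -
  let ?f = "\<lambda>p. lam (periodic_seq (block n)) p"
  have up: "markov_m (periodic_seq (block n)) \<le> 9/2 + 16 / 2 ^ (n - 1)"
    unfolding markov_m_def by (rule cSUP_least) (use per_upper[OF n] in auto)
  have bdd: "bdd_above (range ?f)" using per_upper[OF n] by (intro bdd_aboveI2) auto
  have "?f (int n - 1) \<le> markov_m (periodic_seq (block n))"
    unfolding markov_m_def by (rule cSUP_upper[OF _ bdd]) simp
  then have lo: "9/2 - 16 / 2 ^ (n - 1) \<le> markov_m (periodic_seq (block n))"
    using per_lower[OF n] by linarith
  show ?thesis using up lo by linarith
qed

lemma part4: "(\<lambda>n. markov_m (periodic_seq (block n))) \<longlonglongrightarrow> 9/2"
proof (rule LIM_zero_cancel, rule Lim_null_comparison)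
  show "\<forall>\<^sub>F n in sequentially. norm (markov_m (periodic_seq (block n)) - 9/2) \<le> 32 * inverse (2 ^ n)"
  proof (rule eventually_sequentiallyI[of 2])
    fix n :: nat assume n: "n \<ge> 2"
    have "(16::real) / 2 ^ (n - 1) = 32 * inverse (2 ^ n)"
    proof -
      have "(2::real) ^ n = 2 * 2 ^ (n - 1)" using n by (simp add: power_eq_if)
      then show ?thesis by (simp add: field_simps)
    qed
    then show "norm (markov_m (periodic_seq (block n)) - 9/2) \<le> 32 * inverse (2 ^ n)"
      using per_markov[OF n] by simp
  qed
  show "(\<lambda>n. 32 * inverse ((2::real) ^ n)) \<longlonglongrightarrow> 0"
    using tendsto_mult_right_zero[OF LIMSEQ_inverse_realpow_zero[of 2]] by simp
qed

definition TT :: "nat \<Rightarrow> int" where "TT m = 5 * int (fact (m + 1))"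
definition lvl :: "int \<Rightarrow> nat" where "lvl i = (LEAST m. i < TT (Suc m))"
definition wit :: "int \<Rightarrow> nat" where "wit i = periodic_seq (block (lvl i)) i"

lemma TT_mono: "m \<le> m' \<Longrightarrow> TT m \<le> TT m'"
proof -
  assume "m \<le> m'"
  then have "(fact (m + 1) :: nat) \<le> fact (m' + 1)" by (intro fact_mono) simp
  then have "int (fact (m + 1)) \<le> int (fact (m' + 1))" by (rule of_nat_mono)
  then show ?thesis unfolding TT_def by linarith
qed

lemma TT_ge: "TT m \<ge> 5 * (int m + 1)"
proof -
  have "m + 1 \<le> (fact (m + 1) :: nat)" by (rule fact_ge_self)
  then have h: "int (m + 1) \<le> int (fact (m + 1))" by (rule of_nat_mono)
  show ?thesis unfolding TT_def using h by (smt (verit) of_nat_1 of_nat_add)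
qed

lemma lvl_ex: "\<exists>m. i < TT (Suc m)"
proof -
  have h: "TT (Suc (nat i)) \<ge> 5 * (int (Suc (nat i)) + 1)" by (rule TT_ge)
  have "int (Suc (nat i)) \<ge> i + 1" "int (Suc (nat i)) \<ge> 0" by simp_all
  moreover have "\<And>X T. i + 1 \<le> X \<Longrightarrow> 0 \<le> X \<Longrightarrow> 5 * (X + 1) \<le> T \<Longrightarrow> i < (T::int)" by arith
  ultimately have "i < TT (Suc (nat i))" using h by blast
  then show ?thesis by blast
qed

lemma lvl_less: "i < TT (Suc (lvl i))"
  unfolding lvl_def using lvl_ex by (rule LeastI_ex)

lemma lvl_ge: "lvl i \<ge> 1 \<Longrightarrow> TT (lvl i) \<le> i"
proof -
  assume h: "lvl i \<ge> 1"
  have "\<not> i < TT (Suc (lvl i - 1))" unfolding lvl_def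
    by (rule not_less_Least) (use h in \<open>simp add: lvl_def\<close>)
  then show ?thesis using h by simp
qed

lemma lvl_eq: "TT m \<le> i \<Longrightarrow> i < TT (Suc m) \<Longrightarrow> lvl i = m"
  unfolding lvl_def
proof (rule Least_equality)
  assume h: "TT m \<le> i" "i < TT (Suc m)"
  show "i < TT (Suc m)" by fact
  fix y assume y: "i < TT (Suc y)"
  show "m \<le> y"
  proof (rule ccontr)
    assume "\<not> m \<le> y"
    then have "TT (Suc y) \<le> TT m" by (intro TT_mono) simp
    then show False using h y by simp
  qed
qed

lemma lvl_mono: "TT M \<le> i \<Longrightarrow> M \<le> lvl i"
proof (rule ccontr)
  assume h: "TT M \<le> i" "\<not> M \<le> lvl i"
  then have "TT (Suc (lvl i)) \<le> TT M" by (intro TT_mono) simp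
  then show False using h lvl_less[of i] by simp
qed

lemma dvd_TT: "int (5 * m + 5) dvd TT m"
proof -
  have "fact (m + 1) = (m + 1) * fact m" by simp
  then have "TT m = int (5 * m + 5) * int (fact m)" unfolding TT_def by (simp add: algebra_simps)
  then show ?thesis by simp
qed

lemma dvd_TT1: "int (5 * m + 5) dvd TT (Suc m)"
proof -
  have "fact (Suc m + 1) = (m + 2) * ((m + 1) * fact m)" by (simp add: algebra_simps)
  then have "TT (Suc m) = int (5 * m + 5) * (int (m + 2) * int (fact m))" unfolding TT_def
    by (simp add: algebra_simps)
  then show ?thesis by simp
qed

lemma TT_gap: assumes m1: "m \<ge> 1" shows "TT m + int (5 * m + 10) \<le> TT (Suc m)"
proof -
  have f: "fact (Suc m + 1) = (m + 2) * fact (m + 1)" by simp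
  have "TT (Suc m) = (int m + 2) * TT m" unfolding TT_def f by (simp add: algebra_simps)
  moreover have "TT m \<ge> 5 * (int m + 1)" by (rule TT_ge)
  ultimately have "TT (Suc m) - TT m = (int m + 1) * TT m" by (simp add: algebra_simps)
  also have "\<dots> \<ge> (int m + 1) * 10" using TT_ge[of m] m1 by (intro mult_left_mono) auto
  finally show ?thesis using m1 by simp
qed

lemma pos_wit: "pos_seq wit"
  using pos_periodic unfolding pos_seq_def wit_def by blast

lemma blockat_cong: "blockat b s n \<Longrightarrow> (\<And>j. j < 5 * n + 5 \<Longrightarrow> a (s + int j) = b (s + int j)) \<Longrightarrow> blockat a s n"
  unfolding blockat_def by auto

lemma region_block:
  assumes "TT m \<le> s" "s + int (5 * m + 5) \<le> TT (Suc m)" "int (5 * m + 5) dvd s"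
  shows "blockat wit s m"
proof (rule blockat_cong[OF blockat_periodic[OF assms(3)]])
  fix j assume j: "j < 5 * m + 5"
  have "lvl (s + int j) = m" by (rule lvl_eq) (use assms j in linarith)+
  then show "wit (s + int j) = periodic_seq (block m) (s + int j)" unfolding wit_def by simp
qed

lemma aligned:
  fixes L A B p :: int
  assumes L: "L > 0" and dA: "L dvd A" and dB: "L dvd B" and p: "A \<le> p" "p < B"
  defines "s \<equiv> L * (p div L)"
  shows "A \<le> s \<and> s + L \<le> B \<and> L dvd s \<and> s \<le> p \<and> p \<le> s + L - 1 \<and>
         (s - L < A \<longrightarrow> s = A) \<and> (B < s + 2 * L \<longrightarrow> s + L = B)"
proof -
  obtain a where a: "A = L * a" using dA by (auto elim: dvdE)
  obtain b where b: "B = L * b" using dB by (auto elim: dvdE)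
  define q where "q = p div L"
  define r where "r = p mod L"
  have pq: "p = L * q + r" unfolding q_def r_def by simp
  have r0: "0 \<le> r" "r < L" unfolding r_def using L by simp_all
  have "L * a < L * (q + 1)" using a p pq r0 by (simp add: algebra_simps)
  then have aq: "a \<le> q" using L by (simp add: mult_less_cancel_left_pos)
  have "L * q < L * b" using b p(2) pq r0 by linarith
  then have qb: "q < b" using L by (simp add: mult_less_cancel_left_pos)
  have sq: "s = L * q" unfolding s_def q_def ..
  have A1: "A \<le> s" unfolding sq a using aq L by (simp add: mult_left_mono)
  have "L * (q + 1) \<le> L * b" using qb L by (intro mult_left_mono) auto
  then have A2: "s + L \<le> B" unfolding sq b by (simp add: algebra_simps)
  have A3: "s - L < A \<longrightarrow> s = A"
  proof
    assume "s - L < A"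
    then have "L * (q - 1) < L * a" unfolding sq a by (simp add: algebra_simps)
    then have "q - 1 < a" using L by (simp add: mult_less_cancel_left_pos)
    then show "s = A" unfolding sq a using aq by simp
  qed
  have A4: "B < s + 2 * L \<longrightarrow> s + L = B"
  proof
    assume "B < s + 2 * L"
    then have "L * b < L * (q + 2)" unfolding sq b by (simp add: algebra_simps)
    then have "b < q + 2" using L by (simp add: mult_less_cancel_left_pos)
    then have "b = q + 1" using qb by simp
    then show "s + L = B" unfolding sq b by (simp add: algebra_simps)
  qed
  show ?thesis using A1 A2 A3 A4 pq r0 unfolding sq by auto
qed

lemma wit_upper: assumes m: "lvl p = m" "m \<ge> 2"
  shows "lam wit p \<le> 9/2 + 16 / 2 ^ (m - 1)"
proof -
  let ?L = "int (5 * m + 5)"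
  define s where "s = ?L * (p div ?L)"
  have pA: "TT m \<le> p" using lvl_ge[of p] m by simp
  have pB: "p < TT (Suc m)" using lvl_less[of p] m by simp
  have al: "TT m \<le> s \<and> s + ?L \<le> TT (Suc m) \<and> ?L dvd s \<and> s \<le> p \<and> p \<le> s + ?L - 1 \<and>
         (s - ?L < TT m \<longrightarrow> s = TT m) \<and> (TT (Suc m) < s + 2 * ?L \<longrightarrow> s + ?L = TT (Suc m))"
    unfolding s_def by (rule aligned) (use dvd_TT dvd_TT1 pA pB in auto)
  have b: "blockat wit s m" by (rule region_block) (use al in auto)
  obtain n' where n': "blockat wit (s - 5 * int n' - 5) n'" "m - 1 \<le> n'"
  proof (cases "s - ?L < TT m")
    case False
    have "blockat wit (s - 5 * int m - 5) m"
    proof (rule region_block)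
      show "TT m \<le> s - 5 * int m - 5" using False by simp
      show "s - 5 * int m - 5 + int (5 * m + 5) \<le> TT (Suc m)" using al by simp
      have "?L dvd s - ?L" using al by simp
      then show "int (5 * m + 5) dvd s - 5 * int m - 5" by (simp add: algebra_simps)
    qed
    then show ?thesis using that[of m] by simp
  next
    case True
    then have sT: "s = TT m" using al by simp
    have gap: "TT (m - 1) + int (5 * (m - 1) + 10) \<le> TT (Suc (m - 1))" by (rule TT_gap) (use m in simp)
    have sm: "Suc (m - 1) = m" using m by simp
    have "blockat wit (s - 5 * int (m - 1) - 5) (m - 1)"
    proof (rule region_block)
      show "TT (m - 1) \<le> s - 5 * int (m - 1) - 5" using gap sT sm by simp
      show "s - 5 * int (m - 1) - 5 + int (5 * (m - 1) + 5) \<le> TT (Suc (m - 1))" using sT sm by simp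
      have d1: "int (5 * (m - 1) + 5) dvd TT (Suc (m - 1))" by (rule dvd_TT1)
      have "int (5 * (m - 1) + 5) dvd TT m - int (5 * (m - 1) + 5)" using d1 sm by simp
      moreover have "TT m - int (5 * (m - 1) + 5) = s - 5 * int (m - 1) - 5" using sT m by simp
      ultimately show "int (5 * (m - 1) + 5) dvd s - 5 * int (m - 1) - 5" by metis
    qed
    then show ?thesis using that[of "m - 1"] by simp
  qed
  obtain n'' where n'': "blockat wit (s + 5 * int m + 5) n''" "m \<le> n''"
  proof (cases "TT (Suc m) < s + 2 * ?L")
    case False
    have "blockat wit (s + 5 * int m + 5) m"
    proof (rule region_block)
      show "TT m \<le> s + 5 * int m + 5" using al by simp
      show "s + 5 * int m + 5 + int (5 * m + 5) \<le> TT (Suc m)" using False by simp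
      have "?L dvd s + ?L" using al by simp
      then show "int (5 * m + 5) dvd s + 5 * int m + 5" by (simp add: algebra_simps)
    qed
    then show ?thesis using that[of m] by simp
  next
    case True
    then have sT: "s + ?L = TT (Suc m)" using al by simp
    have gap: "TT (Suc m) + int (5 * Suc m + 10) \<le> TT (Suc (Suc m))" by (rule TT_gap) simp
    have "blockat wit (s + 5 * int m + 5) (Suc m)"
    proof (rule region_block)
      show "TT (Suc m) \<le> s + 5 * int m + 5" using sT by simp
      show "s + 5 * int m + 5 + int (5 * Suc m + 5) \<le> TT (Suc (Suc m))" using sT gap by simp
      have "int (5 * Suc m + 5) dvd TT (Suc m)" by (rule dvd_TT)
      moreover have "s + 5 * int m + 5 = TT (Suc m)" using sT by simp
      ultimately show "int (5 * Suc m + 5) dvd s + 5 * int m + 5" by metis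
    qed
    then show ?thesis using that[of "Suc m"] by simp
  qed
  show ?thesis by (rule GL[OF pos_wit n'(1) b n''(1)]) (use m n' n'' al in auto)
qed

lemma wit_lower: assumes m: "m \<ge> 2"
  shows "\<bar>lam wit (TT m + int m - 1) - 9/2\<bar> \<le> 16 / 2 ^ (m - 1)"
proof -
  have gap: "TT m + int (5 * m + 10) \<le> TT (Suc m)" by (rule TT_gap) (use m in simp)
  have b: "blockat wit (TT m) m" by (rule region_block) (use gap dvd_TT in auto)
  show ?thesis using GL2[OF pos_wit b, of "m - 1"] m by simp
qed

lemma eps_small: assumes e: "(e::real) > 0" shows "\<exists>M\<ge>2. \<forall>l\<ge>M. 16 / 2 ^ (l - 1) < e"
proof -
  obtain k where k: "(1/2::real) ^ k < e / 32" using real_arch_pow_inv[of "e/32" "1/2"] e by auto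
  show ?thesis
  proof (intro exI conjI allI impI)
    show "max 2 k \<ge> 2" by simp
    fix l assume l: "max 2 k \<le> l"
    have "(16::real) / 2 ^ (l - 1) = 32 * (1/2) ^ l"
    proof -
      have "(2::real) ^ l = 2 * 2 ^ (l - 1)" using l by (simp add: power_eq_if)
      then show ?thesis by (simp add: field_simps power_one_over)
    qed
    also have "(1/2::real) ^ l \<le> (1/2) ^ k" using l by (intro power_decreasing) auto
    then have "32 * (1/2::real) ^ l \<le> 32 * (1/2) ^ k" by simp
    finally show "16 / 2 ^ (l - 1) < e" using k by simp
  qed
qed

lemma wit_limsup: "limsup (\<lambda>n::nat. ereal (lambda0 (shift (int n) wit))) = ereal (9/2)"
proof (rule antisym)
  let ?X = "\<lambda>n::nat. ereal (lambda0 (shift (int n) wit))"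
  show "limsup ?X \<le> ereal (9/2)"
  proof (rule ereal_le_epsilon2)
    fix e :: real assume e: "e > 0"
    obtain M where M: "M \<ge> 2" "\<And>l. l \<ge> M \<Longrightarrow> 16 / 2 ^ (l - 1) < e" using eps_small[OF e] by blast
    have "eventually (\<lambda>n. ?X n \<le> ereal (9/2 + e)) sequentially"
    proof (rule eventually_sequentiallyI[of "nat (TT M)"])
      fix n assume n: "nat (TT M) \<le> n"
      have "TT M \<le> int n" using n by linarith
      then have lM: "M \<le> lvl (int n)" by (rule lvl_mono)
      have "lam wit (int n) \<le> 9/2 + 16 / 2 ^ (lvl (int n) - 1)"
        by (rule wit_upper) (use lM M in auto)
      also have "\<dots> \<le> 9/2 + e" using M(2)[OF lM] by simp
      finally show "?X n \<le> ereal (9/2 + e)" by simp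
    qed
    then have "limsup ?X \<le> ereal (9/2 + e)" by (rule Limsup_bounded)
    then show "limsup ?X \<le> ereal (9/2) + ereal e" by simp
  qed
  define r where "r m = nat (TT (m + 2) + int (m + 2) - 1)" for m
  have rT: "int (r m) = TT (m + 2) + int (m + 2) - 1" for m
  proof -
    have "TT (m + 2) \<ge> 5 * (int (m + 2) + 1)" by (rule TT_ge)
    then show ?thesis unfolding r_def by simp
  qed
  have sm: "strict_mono r"
  proof (rule strict_mono_Suc_iff[THEN iffD2], intro allI)
    fix m
    have "TT (m + 2) \<le> TT (Suc m + 2)" by (rule TT_mono) simp
    then have "int (r m) < int (r (Suc m))" unfolding rT by simp
    then show "r m < r (Suc m)" by simp
  qed
  have lim: "(\<lambda>m. lam wit (TT (m + 2) + int (m + 2) - 1)) \<longlonglongrightarrow> 9/2"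
  proof (rule LIM_zero_cancel, rule Lim_null_comparison)
    show "\<forall>\<^sub>F m in sequentially. norm (lam wit (TT (m + 2) + int (m + 2) - 1) - 9/2) \<le> 8 * inverse (2 ^ m)"
    proof (rule eventually_sequentiallyI[of 0])
      fix m :: nat
      have "(16::real) / 2 ^ (m + 2 - 1) = 8 * inverse (2 ^ m)" by (simp add: field_simps)
      then show "norm (lam wit (TT (m + 2) + int (m + 2) - 1) - 9/2) \<le> 8 * inverse (2 ^ m)"
        using wit_lower[of "m + 2"] by simp
    qed
    show "(\<lambda>m. 8 * inverse ((2::real) ^ m)) \<longlonglongrightarrow> 0"
      using tendsto_mult_right_zero[OF LIMSEQ_inverse_realpow_zero[of 2]] by simp
  qed
  have "(?X \<circ> r) = (\<lambda>m. ereal (lam wit (TT (m + 2) + int (m + 2) - 1)))"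
    unfolding comp_def rT ..
  then have "limsup (?X \<circ> r) = ereal (9/2)"
    using lim_imp_Limsup[OF trivial_limit_sequentially tendsto_ereal[OF lim]] by simp
  then show "ereal (9/2) \<le> limsup ?X" using limsup_subseq_mono[OF sm, of ?X] by simp
qed

lemma part5: "(9/2::real) \<in> lagrange_spectrum \<inter> \<rat>"
proof
  show "(9/2::real) \<in> lagrange_spectrum"
    unfolding lagrange_spectrum_def using pos_wit wit_limsup by blast
  have "(9/2::real) = of_rat (9/2)" by (simp add: of_rat_divide)
  then show "(9/2::real) \<in> \<rat>" by (metis Rats_of_rat)
qed

theorem lemma3p9:
  shows "cf (\<lambda>_. 4) + cf (\<lambda>k. if k = 0 then 0 else if k = 1 then 3 else [1,3,1,2] ! ((k - 2) mod 4)) = 9/2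
    \<and> 9/2 = cf (\<lambda>k. if k = 0 then 3 else if k = 1 then 1 else if k = 2 then 3 else 4)
               + cf (\<lambda>k. if k = 0 then 0 else [1,2,1,3] ! ((k - 1) mod 4))
    \<and> (9/2::real) = markov_m seqA
    \<and> (\<lambda>n. markov_m (periodic_seq (block n))) \<longlonglongrightarrow> 9/2
    \<and> (9/2::real) \<in> lagrange_spectrum \<inter> \<rat>"
  using part1 part2 part3 part4 part5 by blast

end
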